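(* Let $D$ be an associative division algebra finite-dimensional over its center $F$, let $\sigma\in\mathrm{Aut}(D)$ be such that $\sigma|_F$ has finite order $m$, let $F_0=\mathrm{Fix}(\sigma)\cap F$, let $d\in D\setminus F_0$ and $A=(D,\sigma,d)$. Suppose $F_0$ contains a primitive $m$th root of unity. If $f(t)=t^m-d\in D[t;\sigma]$ is irreducible, then $A$ is a nonassociative cyclic extension of $D$ of degree $m$. In particular, if $m$ is prime and $d\neq\sigma^{m-1}(z)\cdots\sigma(z)z$ for all $z\in D$, then $A$ is a nonassociative cyclic extension of $D$ of degree $m$.
   Context: $D[t;\sigma]$ is the twisted polynomial ring: polynomials $\sum a_it^i$ ($a_i\in D$), multiplication determined by $ta=\sigma(a)t$; $f$ is irreducible if it is not a unit and is not a product $gh$ of two non-units. For $d\in D^\times$, $(D,\sigma,d)$ is the set of polynomials of degree $<m$ in $D[t;\sigma]$ with multiplication $g\circ h=$ remainder of $gh$ on right division by $t^m-d$; it is a unital algebra over $F_0$ containing $D$. Definition: if $A$ is a nonassociative division algebra (left and right multiplication by every nonzero element bijective) and $D\subseteq A$ an associative division subalgebra, $A$ is a nonassociative cyclic extension of $D$ of degree $m$ if $A$ is a free left $D$-module of rank $m$ and $\mathrm{Aut}(A)$ has a cyclic subgroup $G$ of order $m$ with $H|_D=\mathrm{id}_D$ for all $H\in G$. *)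

theory Defs
  imports "HOL-Computational_Algebra.Primes"
begin

definition center :: "'a::division_ring set" where
  "center = {x. \<forall>y. x * y = y * x}"

definition fin_dim_over_center :: "'a::division_ring itself \<Rightarrow> bool" where
  "fin_dim_over_center _ \<longleftrightarrow>
     (\<exists>B::'a set. finite B \<and>
        (\<forall>x. \<exists>c. (\<forall>b\<in>B. c b \<in> center) \<and> x = (\<Sum>b\<in>B. c b * b)))"

definition ring_aut :: "('a::division_ring \<Rightarrow> 'a) \<Rightarrow> bool" where
  "ring_aut \<sigma> \<longleftrightarrow> bij \<sigma> \<and> (\<forall>x y. \<sigma> (x + y) = \<sigma> x + \<sigma> y)
      \<and> (\<forall>x y. \<sigma> (x * y) = \<sigma> x * \<sigma> y) \<and> \<sigma> 1 = 1"

definition order_on_center :: "('a::division_ring \<Rightarrow> 'a) \<Rightarrow> nat \<Rightarrow> bool" where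
  "order_on_center \<sigma> m \<longleftrightarrow> 0 < m \<and> (\<forall>x\<in>center. (\<sigma>^^m) x = x)
      \<and> (\<forall>k. 0 < k \<and> k < m \<longrightarrow> (\<exists>x\<in>center. (\<sigma>^^k) x \<noteq> x))"

definition fixed_center :: "('a::division_ring \<Rightarrow> 'a) \<Rightarrow> 'a set" where
  "fixed_center \<sigma> = {x \<in> center. \<sigma> x = x}"

definition primitive_root :: "nat \<Rightarrow> 'a::division_ring \<Rightarrow> bool" where
  "primitive_root m w \<longleftrightarrow> w ^ m = 1 \<and> (\<forall>k. 0 < k \<and> k < m \<longrightarrow> w ^ k \<noteq> 1)"

fun twisted_norm :: "('a::division_ring \<Rightarrow> 'a) \<Rightarrow> nat \<Rightarrow> 'a \<Rightarrow> 'a" where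
  "twisted_norm \<sigma> 0 z = 1"
| "twisted_norm \<sigma> (Suc k) z = (\<sigma>^^k) z * twisted_norm \<sigma> k z"

(* A twisted polynomial sum a_i t^i is represented by its coefficient function,
   which must have finite support. *)
definition tpoly :: "(nat \<Rightarrow> 'a::division_ring) \<Rightarrow> bool" where
  "tpoly f \<longleftrightarrow> finite {n. f n \<noteq> 0}"

definition tp_add :: "(nat \<Rightarrow> 'a::division_ring) \<Rightarrow> (nat \<Rightarrow> 'a) \<Rightarrow> nat \<Rightarrow> 'a" where
  "tp_add f g = (\<lambda>n. f n + g n)"

(* (a t^i)(b t^j) = a sigma^i(b) t^(i+j) *)
definition tp_mul :: "('a::division_ring \<Rightarrow> 'a) \<Rightarrow> (nat \<Rightarrow> 'a) \<Rightarrow> (nat \<Rightarrow> 'a) \<Rightarrow> nat \<Rightarrow> 'a" where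
  "tp_mul \<sigma> f g = (\<lambda>n. \<Sum>i\<le>n. f i * (\<sigma>^^i) (g (n - i)))"

definition tp_const :: "'a::division_ring \<Rightarrow> nat \<Rightarrow> 'a" where
  "tp_const c = (\<lambda>n. if n = 0 then c else 0)"

definition tp_unit :: "('a::division_ring \<Rightarrow> 'a) \<Rightarrow> (nat \<Rightarrow> 'a) \<Rightarrow> bool" where
  "tp_unit \<sigma> f \<longleftrightarrow> tpoly f \<and>
     (\<exists>g. tpoly g \<and> tp_mul \<sigma> f g = tp_const 1 \<and> tp_mul \<sigma> g f = tp_const 1)"

definition tp_irreducible :: "('a::division_ring \<Rightarrow> 'a) \<Rightarrow> (nat \<Rightarrow> 'a) \<Rightarrow> bool" where
  "tp_irreducible \<sigma> f \<longleftrightarrow> tpoly f \<and> \<not> tp_unit \<sigma> f \<and>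
     (\<forall>g h. tpoly g \<and> tpoly h \<and> f = tp_mul \<sigma> g h \<longrightarrow> tp_unit \<sigma> g \<or> tp_unit \<sigma> h)"

definition tm_minus :: "nat \<Rightarrow> 'a::division_ring \<Rightarrow> nat \<Rightarrow> 'a" where
  "tm_minus m d = (\<lambda>n. (if n = m then 1 else 0) - (if n = 0 then d else 0))"

definition SA_carrier :: "nat \<Rightarrow> (nat \<Rightarrow> 'a::division_ring) set" where
  "SA_carrier m = {f. \<forall>n\<ge>m. f n = 0}"

definition tp_rrem :: "('a::division_ring \<Rightarrow> 'a) \<Rightarrow> nat \<Rightarrow> 'a \<Rightarrow> (nat \<Rightarrow> 'a) \<Rightarrow> nat \<Rightarrow> 'a" where
  "tp_rrem \<sigma> m d p = (THE r. r \<in> SA_carrier m \<and>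
       (\<exists>q. tpoly q \<and> p = tp_add (tp_mul \<sigma> q (tm_minus m d)) r))"

definition SA_mult :: "('a::division_ring \<Rightarrow> 'a) \<Rightarrow> nat \<Rightarrow> 'a \<Rightarrow> (nat \<Rightarrow> 'a) \<Rightarrow> (nat \<Rightarrow> 'a) \<Rightarrow> nat \<Rightarrow> 'a" where
  "SA_mult \<sigma> m d g h = tp_rrem \<sigma> m d (tp_mul \<sigma> g h)"

definition SA_division :: "('a::division_ring \<Rightarrow> 'a) \<Rightarrow> nat \<Rightarrow> 'a \<Rightarrow> bool" where
  "SA_division \<sigma> m d \<longleftrightarrow>
     (\<forall>a\<in>SA_carrier m. a \<noteq> (\<lambda>_. 0) \<longrightarrow>
        bij_betw (\<lambda>x. SA_mult \<sigma> m d a x) (SA_carrier m) (SA_carrier m) \<and>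
        bij_betw (\<lambda>x. SA_mult \<sigma> m d x a) (SA_carrier m) (SA_carrier m))"

(* A is a free left D-module of rank m (left D-action: multiplication by constants) *)
definition SA_free_rank :: "('a::division_ring \<Rightarrow> 'a) \<Rightarrow> nat \<Rightarrow> 'a \<Rightarrow> nat \<Rightarrow> bool" where
  "SA_free_rank \<sigma> m d r \<longleftrightarrow>
     (\<exists>b::nat \<Rightarrow> nat \<Rightarrow> 'a. (\<forall>i<r. b i \<in> SA_carrier m) \<and>
        (\<forall>x\<in>SA_carrier m. \<exists>!c::nat \<Rightarrow> 'a. (\<forall>i\<ge>r. c i = 0) \<and>
            x = (\<lambda>n. \<Sum>i<r. SA_mult \<sigma> m d (tp_const (c i)) (b i) n)))"

definition SA_aut :: "('a::division_ring \<Rightarrow> 'a) \<Rightarrow> nat \<Rightarrow> 'a \<Rightarrow> ((nat \<Rightarrow> 'a) \<Rightarrow> (nat \<Rightarrow> 'a)) \<Rightarrow> bool" where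
  "SA_aut \<sigma> m d H \<longleftrightarrow> bij_betw H (SA_carrier m) (SA_carrier m) \<and>
     (\<forall>x\<in>SA_carrier m. \<forall>y\<in>SA_carrier m.
        H (tp_add x y) = tp_add (H x) (H y) \<and>
        H (SA_mult \<sigma> m d x y) = SA_mult \<sigma> m d (H x) (H y)) \<and>
     (\<forall>c\<in>fixed_center \<sigma>. \<forall>x\<in>SA_carrier m.
        H (SA_mult \<sigma> m d (tp_const c) x) = SA_mult \<sigma> m d (tp_const c) (H x))"

definition nonassoc_cyclic_ext :: "('a::division_ring \<Rightarrow> 'a) \<Rightarrow> nat \<Rightarrow> 'a \<Rightarrow> bool" where
  "nonassoc_cyclic_ext \<sigma> m d \<longleftrightarrow>
     SA_division \<sigma> m d \<and> SA_free_rank \<sigma> m d m \<and>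
     (\<exists>H. SA_aut \<sigma> m d H \<and>
        (\<forall>k. \<forall>c. (H^^k) (tp_const c) = tp_const c) \<and>
        (\<forall>x\<in>SA_carrier m. (H^^m) x = x) \<and>
        (\<forall>k. 0 < k \<and> k < m \<longrightarrow> (\<exists>x\<in>SA_carrier m. (H^^k) x \<noteq> x)))"

end

theory Submission
  imports Defs "HOL-Computational_Algebra.Polynomial"
begin


locale tw =
  fixes \<sigma> :: "'a::division_ring \<Rightarrow> 'a"
  assumes s_add: "\<And>x y. \<sigma> (x + y) = \<sigma> x + \<sigma> y"
    and s_mult: "\<And>x y. \<sigma> (x * y) = \<sigma> x * \<sigma> y"
    and s_one: "\<sigma> 1 = 1"
    and s_bij: "bij \<sigma>"
begin

lemma s_zero: "\<sigma> 0 = 0"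
  using s_add[of 0 0] by simp

lemma sp_add: "(\<sigma>^^i) (x + y) = (\<sigma>^^i) x + (\<sigma>^^i) y"
  by (induction i) (auto simp: s_add)
lemma sp_mult: "(\<sigma>^^i) (x * y) = (\<sigma>^^i) x * (\<sigma>^^i) y"
  by (induction i) (auto simp: s_mult)
lemma sp_zero[simp]: "(\<sigma>^^i) 0 = 0"
  by (induction i) (auto simp: s_zero)
lemma sp_one[simp]: "(\<sigma>^^i) 1 = 1"
  by (induction i) (auto simp: s_one)
lemma sp_uminus: "(\<sigma>^^i) (- x) = - (\<sigma>^^i) x"
  using sp_add[of i x "-x"] by (simp add: add.inverse_unique)
lemma sp_diff: "(\<sigma>^^i) (x - y) = (\<sigma>^^i) x - (\<sigma>^^i) y"
  using sp_add[of i x "-y"] by (simp add: sp_uminus)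
lemma sp_inj: "inj (\<sigma>^^i)"
  using s_bij by (simp add: bij_is_inj inj_fn)
lemma sp_nz: "x \<noteq> 0 \<Longrightarrow> (\<sigma>^^i) x \<noteq> 0"
  using sp_inj[of i] sp_zero[of i] by (metis injD)
lemma sp_sum: "(\<sigma>^^i) (sum f A) = (\<Sum>a\<in>A. (\<sigma>^^i) (f a))"
  by (induction A rule: infinite_finite_induct) (auto simp: sp_add)
lemma sp_comp: "(\<sigma>^^i) ((\<sigma>^^j) x) = (\<sigma>^^(i+j)) x"
  by (simp add: funpow_add)

definition pm :: "'a poly \<Rightarrow> 'a poly \<Rightarrow> 'a poly" where
  "pm p q = Abs_poly (\<lambda>n. \<Sum>i\<le>n. coeff p i * (\<sigma>^^i) (coeff q (n - i)))"

lemma coeff_pm: "coeff (pm p q) n = (\<Sum>i\<le>n. coeff p i * (\<sigma>^^i) (coeff q (n - i)))"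
proof -
  have "coeff (pm p q) = (\<lambda>n. \<Sum>i\<le>n. coeff p i * (\<sigma>^^i) (coeff q (n - i)))"
    unfolding pm_def
  proof (rule coeff_Abs_poly[where n="degree p + degree q"])
    fix n assume n: "degree p + degree q < n"
    show "(\<Sum>i\<le>n. coeff p i * (\<sigma>^^i) (coeff q (n - i))) = 0"
    proof (intro sum.neutral ballI)
      fix i assume "i \<in> {..n}"
      show "coeff p i * (\<sigma>^^i) (coeff q (n - i)) = 0"
      proof (cases "degree p < i")
        case True then show ?thesis by (simp add: coeff_eq_0)
      next
        case False then have "degree q < n - i" using n by linarith
        then show ?thesis by (simp add: coeff_eq_0)
      qed
    qed
  qed
  then show ?thesis by simp
qed

lemma pm_add_left: "pm (p + q) r = pm p r + pm q r"
  by (rule poly_eqI) (simp add: coeff_pm distrib_right sum.distrib)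
lemma pm_add_right: "pm p (q + r) = pm p q + pm p r"
  by (rule poly_eqI) (simp add: coeff_pm sp_add distrib_left sum.distrib)
lemma pm_zero_left[simp]: "pm 0 q = 0"
  by (rule poly_eqI) (simp add: coeff_pm)
lemma pm_zero_right[simp]: "pm p 0 = 0"
  by (rule poly_eqI) (simp add: coeff_pm)
lemma pm_uminus_left: "pm (- p) q = - pm p q"
  by (rule poly_eqI) (simp add: coeff_pm sum_negf)
lemma pm_uminus_right: "pm p (- q) = - pm p q"
  by (rule poly_eqI) (simp add: coeff_pm sum_negf sp_uminus)
lemma pm_diff_left: "pm (p - q) r = pm p r - pm q r"
  using pm_add_left[of p "-q" r] by (simp add: pm_uminus_left)
lemma pm_diff_right: "pm p (q - r) = pm p q - pm p r"
  using pm_add_right[of p q "-r"] by (simp add: pm_uminus_right)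
lemma pm_sum_left: "pm (sum f A) r = (\<Sum>a\<in>A. pm (f a) r)"
  by (induction A rule: infinite_finite_induct) (auto simp: pm_add_left)
lemma pm_sum_right: "pm r (sum f A) = (\<Sum>a\<in>A. pm r (f a))"
  by (induction A rule: infinite_finite_induct) (auto simp: pm_add_right)

lemma coeff_pm_monom_left:
  "coeff (pm (monom c j) g) n = (if j \<le> n then c * (\<sigma>^^j) (coeff g (n - j)) else 0)"
proof -
  have "coeff (pm (monom c j) g) n = (\<Sum>i\<le>n. (if i = j then c * (\<sigma>^^i) (coeff g (n - i)) else 0))"
    unfolding coeff_pm by (rule sum.cong) (auto simp: coeff_monom)
  also have "\<dots> = (if j \<le> n then c * (\<sigma>^^j) (coeff g (n - j)) else 0)"
    by (simp add: sum.delta)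
  finally show ?thesis .
qed

lemma coeff_pm_monom_right:
  "coeff (pm g (monom c j)) n = (if j \<le> n then coeff g (n - j) * (\<sigma>^^(n-j)) c else 0)"
proof -
  have "coeff (pm g (monom c j)) n = (\<Sum>i\<le>n. (if i = n - j \<and> j \<le> n then coeff g i * (\<sigma>^^i) c else 0))"
    unfolding coeff_pm by (rule sum.cong) (auto simp: coeff_monom)
  also have "\<dots> = (if j \<le> n then coeff g (n - j) * (\<sigma>^^(n-j)) c else 0)"
    by (cases "j \<le> n") (simp_all add: sum.delta)
  finally show ?thesis .
qed

lemma pm_monom_monom: "pm (monom a i) (monom b j) = monom (a * (\<sigma>^^i) b) (i + j)"
  by (rule poly_eqI) (auto simp: coeff_pm_monom_left coeff_monom)

abbreviation pone :: "'a poly" where "pone \<equiv> monom 1 0"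
lemma pm_one_left[simp]: "pm pone p = p"
  by (auto intro!: poly_eqI simp: coeff_pm_monom_left)
lemma pm_one_right[simp]: "pm p pone = p"
  by (auto intro!: poly_eqI simp: coeff_pm_monom_right)

lemma pm_assoc: "pm (pm p q) r = pm p (pm q r)"
proof -
  have mono: "pm (pm (monom a i) (monom b j)) (monom c k) = pm (monom a i) (pm (monom b j) (monom c k))"
    for a b c i j k
    by (simp add: pm_monom_monom sp_mult sp_comp mult.assoc add_ac)
  let ?P = "\<lambda>i. monom (coeff p i) i" and ?Q = "\<lambda>i. monom (coeff q i) i" and ?R = "\<lambda>i. monom (coeff r i) i"
  have e1: "pm (pm p q) r = pm (pm (\<Sum>i\<le>degree p. ?P i) (\<Sum>j\<le>degree q. ?Q j)) (\<Sum>k\<le>degree r. ?R k)"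
    by (simp add: poly_as_sum_of_monoms)
  have e2: "pm p (pm q r) = pm (\<Sum>i\<le>degree p. ?P i) (pm (\<Sum>j\<le>degree q. ?Q j) (\<Sum>k\<le>degree r. ?R k))"
    by (simp add: poly_as_sum_of_monoms)
  show ?thesis unfolding e1 e2 pm_sum_left pm_sum_right mono
    by (rule refl)
qed

end

lemma sum_single: "finite A \<Longrightarrow> a \<in> A \<Longrightarrow> (\<And>i. i \<in> A \<Longrightarrow> i \<noteq> a \<Longrightarrow> f i = 0) \<Longrightarrow> sum f A = f a"
  by (simp add: sum.remove[of A a] sum.neutral)

context tw begin

lemma coeff_pm_high: assumes "degree p + degree q < n" shows "coeff (pm p q) n = 0"
  unfolding coeff_pm
proof (intro sum.neutral ballI)
  fix i assume "i \<in> {..n}"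
  show "coeff p i * (\<sigma>^^i) (coeff q (n - i)) = 0"
  proof (cases "degree p < i")
    case True then show ?thesis by (simp add: coeff_eq_0)
  next
    case False then have "degree q < n - i" using assms by linarith
    then show ?thesis by (simp add: coeff_eq_0)
  qed
qed

lemma coeff_pm_top: "coeff (pm p q) (degree p + degree q) = lead_coeff p * (\<sigma>^^(degree p)) (lead_coeff q)"
proof -
  let ?N = "degree p + degree q"
  have "coeff (pm p q) ?N = (\<Sum>i\<in>{..?N}. coeff p i * (\<sigma>^^i) (coeff q (?N - i)))" by (simp add: coeff_pm)
  also have "\<dots> = coeff p (degree p) * (\<sigma>^^(degree p)) (coeff q (?N - degree p))"
  proof (rule sum_single)
    fix i assume "i \<in> {..?N}" "i \<noteq> degree p"
    then show "coeff p i * (\<sigma>^^i) (coeff q (?N - i)) = 0"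
      by (cases "degree p < i") (auto simp: coeff_eq_0)
  qed auto
  finally show ?thesis by simp
qed

lemma pm_nz: assumes "p \<noteq> 0" "q \<noteq> 0" shows "pm p q \<noteq> 0"
proof -
  have "coeff (pm p q) (degree p + degree q) \<noteq> 0"
    using assms by (simp add: coeff_pm_top sp_nz)
  then show ?thesis by auto
qed

lemma degree_pm: assumes "p \<noteq> 0" "q \<noteq> 0" shows "degree (pm p q) = degree p + degree q"
proof (rule antisym)
  show "degree (pm p q) \<le> degree p + degree q" by (rule degree_le) (auto simp: coeff_pm_high)
  show "degree p + degree q \<le> degree (pm p q)"
    using assms by (intro le_degree) (simp add: coeff_pm_top sp_nz)
qed

lemma degree_pm_le: "degree (pm p q) \<le> degree p + degree q"
  by (rule degree_le) (auto simp: coeff_pm_high)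

lemma lead_pm: assumes "p \<noteq> 0" "q \<noteq> 0"
  shows "lead_coeff (pm p q) = lead_coeff p * (\<sigma>^^(degree p)) (lead_coeff q)"
  using assms by (simp add: degree_pm coeff_pm_top)

lemma pm_eq0: "pm p q = 0 \<longleftrightarrow> p = 0 \<or> q = 0"
  using pm_nz by auto

lemma coeff_cmul: "coeff (pm (monom c 0) p) n = c * coeff p n"
  by (simp add: coeff_pm_monom_left)

lemma rdiv: assumes g: "g \<noteq> 0" shows "\<exists>s e. p = pm s g + e \<and> (e = 0 \<or> degree e < degree g)"
proof (induction "degree p" arbitrary: p rule: less_induct)
  case less
  show ?case
  proof (cases "p = 0 \<or> degree p < degree g")
    case True then show ?thesis by (rule_tac x=0 in exI, rule_tac x=p in exI) auto
  next
    case False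
    define n where "n = degree p"
    define k where "k = degree g"
    have kn: "k \<le> n" using False unfolding n_def k_def by auto
    have pnz: "p \<noteq> 0" using False by auto
    define x where "x = (\<sigma>^^(n-k)) (lead_coeff g)"
    have xnz: "x \<noteq> 0" using g by (simp add: x_def sp_nz)
    define c where "c = lead_coeff p * inverse x"
    define p' where "p' = p - pm (monom c (n-k)) g"
    have cn: "coeff p' n = 0"
      using kn xnz by (simp add: p'_def coeff_pm_monom_left c_def x_def k_def n_def mult.assoc)
    have dn: "degree p' \<le> n"
    proof (rule degree_le, intro allI impI)
      fix i assume i: "n < i"
      then have "coeff p i = 0" by (simp add: n_def coeff_eq_0)
      moreover have "coeff g (i - (n - k)) = 0" using i kn by (intro coeff_eq_0) (simp add: k_def)
      ultimately show "coeff p' i = 0" using i by (simp add: p'_def coeff_pm_monom_left)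
    qed
    have p'cases: "p' = 0 \<or> degree p' < n"
    proof (rule ccontr)
      assume "\<not> ?thesis"
      then have "degree p' = n" "p' \<noteq> 0" using dn by auto
      then show False using cn by (metis leading_coeff_0_iff)
    qed
    show ?thesis
    proof (cases "p' = 0")
      case True
      then have "p = pm (monom c (n-k)) g + 0" by (simp add: p'_def)
      then show ?thesis by blast
    next
      case False
      then have "degree p' < degree p" using p'cases n_def by auto
      from less(1)[OF this] obtain s e where se: "p' = pm s g + e" "e = 0 \<or> degree e < degree g" by blast
      have "p = pm (s + monom c (n-k)) g + e"
        using se(1) by (simp add: p'_def pm_add_left algebra_simps)
      then show ?thesis using se(2) by blast
    qed
  qed
qed

definition rdvd :: "'a poly \<Rightarrow> 'a poly \<Rightarrow> bool" where
  "rdvd h p \<longleftrightarrow> (\<exists>a. p = pm a h)"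

definition punit :: "'a poly \<Rightarrow> bool" where
  "punit g \<longleftrightarrow> g \<noteq> 0 \<and> degree g = 0"

lemma punit_inv: assumes "punit g" shows "\<exists>g'. pm g' g = pone \<and> pm g g' = pone"
proof -
  obtain c where c: "g = monom c 0" "c \<noteq> 0" using assms unfolding punit_def
    by (metis degree0_coeffs monom_0 pCons_eq_0_iff)
  show ?thesis
    by (rule exI[of _ "monom (inverse c) 0"]) (simp add: c pm_monom_monom)
qed

lemma punit_of_inv: assumes "pm g' g = pone" shows "punit g"
proof -
  have "g \<noteq> 0" "g' \<noteq> 0" using assms by auto
  then have "degree g' + degree g = 0" using degree_pm assms by (metis degree_monom_eq zero_neq_one)
  then show ?thesis using \<open>g \<noteq> 0\<close> by (simp add: punit_def)
qed

end

context tw begin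

lemma deg_of_div:
  assumes "h = pm s g + e" "e = 0 \<or> degree e < degree g" "g \<noteq> 0" "h \<noteq> 0" "degree g \<le> degree h"
  shows "s \<noteq> 0" "degree h = degree s + degree g"
proof -
  show sn: "s \<noteq> 0"
  proof
    assume "s = 0" then have "h = e" using assms by simp
    then show False using assms by auto
  qed
  show "degree h = degree s + degree g"
  proof (cases "e = 0")
    case True then show ?thesis using assms sn by (simp add: degree_pm)
  next
    case False
    then have "degree e < degree (pm s g)" using assms sn by (simp add: degree_pm)
    then show ?thesis using assms sn by (simp add: degree_add_eq_left degree_pm)
  qed
qed

lemma bez_deg_aux:
  "degree g \<le> degree h \<Longrightarrow> g \<noteq> 0 \<Longrightarrow> h \<noteq> 0 \<Longrightarrow> pm u g + pm v h = pone \<Longrightarrow> pm a g = pm b h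
   \<Longrightarrow> (a = 0 \<and> b = 0) \<or> (degree h \<le> degree a \<and> degree g \<le> degree b)"
proof (induction "degree g + degree h" arbitrary: g h u v a b rule: less_induct)
  case less
  obtain s e where se: "h = pm s g + e" "e = 0 \<or> degree e < degree g" using rdiv[OF less.prems(2)] by blast
  note sd = deg_of_div[OF se less.prems(2) less.prems(3) less.prems(1)]
  have bez: "pm v e + pm (u + pm v s) g = pone"
    using less.prems(4) unfolding se(1) by (simp add: pm_add_right pm_add_left pm_assoc algebra_simps)
  have rel: "pm b e = pm (a - pm b s) g"
    using less.prems(5) unfolding se(1) by (simp add: pm_add_right pm_diff_left pm_assoc algebra_simps)
  show ?case
  proof (cases "b = 0")
    case True
    then have "pm a g = 0" using less.prems(5) by simp
    then show ?thesis using True less.prems(2) by (simp add: pm_eq0)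
  next
    case bnz: False
    show ?thesis
    proof (cases "e = 0")
      case True
      then have "punit g" using bez punit_of_inv by simp
      then have g0: "degree g = 0" by (simp add: punit_def)
      have "pm (a - pm b s) g = 0" using rel True by simp
      then have "a = pm b s" using less.prems(2) by (simp add: pm_eq0)
      then have "degree a = degree b + degree s" using bnz sd by (simp add: degree_pm)
      then show ?thesis using sd g0 by simp
    next
      case enz: False
      have lt: "degree e < degree g" using se(2) enz by simp
      have IH: "(b = 0 \<and> a - pm b s = 0) \<or> (degree g \<le> degree b \<and> degree e \<le> degree (a - pm b s))"
        using less.hyps[of e g v "u + pm v s" b "a - pm b s"] lt less.prems(1) enz less.prems(2) bez rel
        by auto
      then have dg: "degree g \<le> degree b" using bnz by auto
      define w where "w = a - pm b s"
      have aw: "a = pm b s + w" by (simp add: w_def)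
      have dbs: "degree (pm b s) = degree b + degree s" using bnz sd by (simp add: degree_pm)
      have "degree a = degree b + degree s"
      proof (cases "w = 0")
        case True then show ?thesis using aw dbs by simp
      next
        case False
        have "degree w + degree g = degree b + degree e"
          using rel False bnz enz less.prems(2) by (metis w_def degree_pm)
        then have "degree w < degree (pm b s)" using lt dbs by linarith
        then show ?thesis using aw dbs by (simp add: degree_add_eq_left)
      qed
      then show ?thesis using dg sd by simp
    qed
  qed
qed

lemma bez_deg:
  assumes "g \<noteq> 0" "h \<noteq> 0" "pm u g + pm v h = pone" "pm a g = pm b h"
  shows "(a = 0 \<and> b = 0) \<or> (degree h \<le> degree a \<and> degree g \<le> degree b)"
proof (cases "degree g \<le> degree h")
  case True then show ?thesis using bez_deg_aux assms by blast
next
  case False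
  have "(b = 0 \<and> a = 0) \<or> (degree g \<le> degree b \<and> degree h \<le> degree a)"
    using bez_deg_aux[of h g v u b a] False assms by (simp add: add.commute)
  then show ?thesis by auto
qed

lemma lclm_aux:
  "degree g \<le> degree h \<Longrightarrow> g \<noteq> 0 \<Longrightarrow> h \<noteq> 0
   \<Longrightarrow> \<exists>a b. a \<noteq> 0 \<and> b \<noteq> 0 \<and> pm a g = pm b h \<and> degree a \<le> degree h \<and> degree b \<le> degree g"
proof (induction "degree g + degree h" arbitrary: g h rule: less_induct)
  case less
  obtain s e where se: "h = pm s g + e" "e = 0 \<or> degree e < degree g" using rdiv[OF less.prems(2)] by blast
  note sd = deg_of_div[OF se less.prems(2) less.prems(3) less.prems(1)]
  show ?case
  proof (cases "e = 0")
    case True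
    then have "pm s g = pm pone h" using se by simp
    then show ?thesis using sd by (rule_tac exI[of _ s], rule_tac exI[of _ pone]) (auto simp: degree_monom_eq)
  next
    case enz: False
    have lt: "degree e < degree g" using se(2) enz by simp
    obtain a' b' where ab: "a' \<noteq> 0" "b' \<noteq> 0" "pm a' e = pm b' g" "degree a' \<le> degree g" "degree b' \<le> degree e"
      using less.hyps[of e g] lt less.prems enz by auto
    have eq: "pm (pm a' s + b') g = pm a' h"
      unfolding se(1) by (simp add: pm_add_right pm_add_left pm_assoc ab(3))
    have nz: "pm a' s + b' \<noteq> 0"
    proof
      assume "pm a' s + b' = 0"
      then have "pm a' h = 0" using eq by simp
      then show False using ab(1) less.prems(3) by (simp add: pm_eq0)
    qed
    have d1: "degree (pm a' s) \<le> degree h" using ab(1) sd ab(4) by (simp add: degree_pm)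
    have "degree b' \<le> degree h" using ab(5) lt less.prems(1) by linarith
    then have "degree (pm a' s + b') \<le> degree h" using d1 by (simp add: degree_add_le)
    then show ?thesis using nz ab eq lt by (intro exI[of _ "pm a' s + b'"] exI[of _ a']) auto
  qed
qed

lemma lclm_ex:
  assumes "g \<noteq> 0" "h \<noteq> 0"
  shows "\<exists>a b. a \<noteq> 0 \<and> b \<noteq> 0 \<and> pm a g = pm b h \<and> degree a \<le> degree h \<and> degree b \<le> degree g"
proof (cases "degree g \<le> degree h")
  case True then show ?thesis using lclm_aux assms by blast
next
  case False
  then obtain a b where "a \<noteq> 0 \<and> b \<noteq> 0 \<and> pm a h = pm b g \<and> degree a \<le> degree g \<and> degree b \<le> degree h"
    using lclm_aux[of h g] assms by auto
  then show ?thesis by metis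
qed

definition lideal :: "'a poly set \<Rightarrow> bool" where
  "lideal M \<longleftrightarrow> (\<forall>x\<in>M. \<forall>y\<in>M. x - y \<in> M) \<and> (\<forall>c x. x \<in> M \<longrightarrow> pm c x \<in> M)"

lemma lideal_min:
  assumes "lideal M" "p0 \<in> M" "p0 \<noteq> 0"
  obtains L where "L \<in> M" "L \<noteq> 0" "degree L \<le> degree p0" "\<And>p. p \<in> M \<Longrightarrow> rdvd L p"
proof -
  define n where "n = (LEAST n. \<exists>p\<in>M. p \<noteq> 0 \<and> degree p = n)"
  have ex: "\<exists>p\<in>M. p \<noteq> 0 \<and> degree p = degree p0" using assms by blast
  obtain L where L: "L \<in> M" "L \<noteq> 0" "degree L = n"
    using LeastI_ex[of "\<lambda>n. \<exists>p\<in>M. p \<noteq> 0 \<and> degree p = n"] ex unfolding n_def by blast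
  have minL: "\<And>p. p \<in> M \<Longrightarrow> p \<noteq> 0 \<Longrightarrow> degree L \<le> degree p"
    using L(3) unfolding n_def by (metis (mono_tags, lifting) Least_le)
  have "rdvd L p" if p: "p \<in> M" for p
  proof -
    obtain s e where se: "p = pm s L + e" "e = 0 \<or> degree e < degree L" using rdiv[OF L(2)] by blast
    have "e = p - pm s L" using se by simp
    then have "e \<in> M" using assms(1) p L(1) unfolding lideal_def by auto
    then have "e = 0" using se(2) minL by force
    then show ?thesis using se unfolding rdvd_def by auto
  qed
  then show ?thesis using that L minL assms by blast
qed

definition pirr :: "'a poly \<Rightarrow> bool" where
  "pirr f \<longleftrightarrow> f \<noteq> 0 \<and> \<not> punit f \<and> (\<forall>g h. f = pm g h \<longrightarrow> punit g \<or> punit h)"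

lemma cm_inv_unit: assumes "punit r" shows "pm (monom (inverse (coeff r 0)) 0) r = pone"
proof -
  obtain c where c: "r = monom c 0" "c \<noteq> 0" using assms unfolding punit_def
    by (metis degree0_coeffs monom_0 pCons_eq_0_iff)
  then show ?thesis by (simp add: pm_monom_monom coeff_monom)
qed

lemma irr_bezout:
  assumes "pirr f" "x \<noteq> 0" "degree x < degree f"
  shows "\<exists>u v. pm u x + pm v f = pone"
proof -
  define M where "M = {pm u x + pm v f | u v. True}"
  have lM: "lideal M" unfolding lideal_def M_def
  proof (intro conjI ballI allI impI)
    fix y z assume "y \<in> {pm u x + pm v f |u v. True}" "z \<in> {pm u x + pm v f |u v. True}"
    then obtain u v u' v' where "y = pm u x + pm v f" "z = pm u' x + pm v' f" by blast
    then have "y - z = pm (u - u') x + pm (v - v') f" by (simp add: pm_diff_left algebra_simps)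
    then show "y - z \<in> {pm u x + pm v f |u v. True}" by blast
  next
    fix c y assume "y \<in> {pm u x + pm v f |u v. True}"
    then obtain u v where "y = pm u x + pm v f" by blast
    then have "pm c y = pm (pm c u) x + pm (pm c v) f" by (simp add: pm_add_right pm_assoc)
    then show "pm c y \<in> {pm u x + pm v f |u v. True}" by blast
  qed
  have xM: "x \<in> M" unfolding M_def by (rule CollectI, rule exI[of _ pone], rule exI[of _ 0]) simp
  have fM: "f \<in> M" unfolding M_def by (rule CollectI, rule exI[of _ 0], rule exI[of _ pone]) simp
  obtain r where r: "r \<in> M" "r \<noteq> 0" "degree r \<le> degree x" "\<And>p. p \<in> M \<Longrightarrow> rdvd r p"
    using lideal_min[OF lM xM assms(2)] by blast
  obtain s where s: "f = pm s r" using r(4)[OF fM] unfolding rdvd_def by blast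
  have "punit s \<or> punit r" using assms(1) s unfolding pirr_def by blast
  moreover have "\<not> punit s"
  proof
    assume "punit s"
    then have "degree f = degree r" using s r(2) by (simp add: degree_pm punit_def)
    then show False using r(3) assms(3) by simp
  qed
  ultimately have "punit r" by simp
  then have "pone \<in> M" using cm_inv_unit[of r] lM r(1) unfolding lideal_def by metis
  then obtain u v where "pone = pm u x + pm v f" unfolding M_def by blast
  then show ?thesis by metis
qed

lemma irr_no_zd:
  assumes "pirr f" "x \<noteq> 0" "degree x < degree f" "a \<noteq> 0" "degree a < degree f" "pm a x = pm q f"
  shows False
proof -
  obtain u v where "pm u x + pm v f = pone" using irr_bezout assms by blast
  have "f \<noteq> 0" using assms(1) unfolding pirr_def by simp
  from bez_deg[OF assms(2) this \<open>pm u x + pm v f = pone\<close> assms(6)] assms show False by auto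
qed

end


definition sdr :: "'a::division_ring set \<Rightarrow> bool" where
  "sdr K \<longleftrightarrow> 0 \<in> K \<and> 1 \<in> K \<and> (\<forall>x\<in>K. \<forall>y\<in>K. x + y \<in> K \<and> x - y \<in> K \<and> x * y \<in> K)
     \<and> (\<forall>x\<in>K. inverse x \<in> K)"

lemma sdr_sum: "sdr K \<Longrightarrow> (\<And>a. a \<in> A \<Longrightarrow> f a \<in> K) \<Longrightarrow> sum f A \<in> K"
  by (induction A rule: infinite_finite_induct) (auto simp: sdr_def)

lemma sdr_uminus: "sdr K \<Longrightarrow> x \<in> K \<Longrightarrow> - x \<in> K"
  unfolding sdr_def by (metis diff_0)

lemma steinitz:
  assumes "sdr K" "finite I" "finite J" "card I < card J" "\<forall>j\<in>J. \<forall>i\<in>I. v j i \<in> K"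
  shows "\<exists>c. (\<forall>j\<in>J. c j \<in> K) \<and> (\<exists>j\<in>J. c j \<noteq> 0) \<and> (\<forall>i\<in>I. (\<Sum>j\<in>J. c j * v j i) = 0)"
  using assms(2,3,4,5)
proof (induction I arbitrary: J v rule: finite_induct)
  case empty
  then obtain j0 where "j0 \<in> J" by fastforce
  then show ?case using assms(1) unfolding sdr_def
    by (rule_tac x="\<lambda>j. if j = j0 then 1 else 0" in exI) auto
next
  case (insert i0 I)
  show ?case
  proof (cases "\<forall>j\<in>J. v j i0 = 0")
    case True
    have "card I < card J" using insert by simp
    then obtain c where c: "\<forall>j\<in>J. c j \<in> K" "\<exists>j\<in>J. c j \<noteq> 0" "\<forall>i\<in>I. (\<Sum>j\<in>J. c j * v j i) = 0"
      using insert.IH[of J v] insert.prems by auto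
    then show ?thesis using True by (rule_tac x=c in exI) auto
  next
    case False
    then obtain j0 where j0: "j0 \<in> J" "v j0 i0 \<noteq> 0" by blast
    define J' where "J' = J - {j0}"
    define iv where "iv = inverse (v j0 i0)"
    define w where "w = (\<lambda>j i. v j i - v j i0 * iv * v j0 i)"
    have ivK: "iv \<in> K" using insert.prems j0 assms(1) unfolding iv_def sdr_def by auto
    have "card J' = card J - 1" using j0 insert.prems unfolding J'_def by simp
    then have cJ': "card I < card J'" using insert by simp
    have wK: "\<forall>j\<in>J'. \<forall>i\<in>I. w j i \<in> K"
      using insert.prems j0 ivK assms(1) unfolding w_def J'_def sdr_def by auto
    obtain c' where c': "\<forall>j\<in>J'. c' j \<in> K" "\<exists>j\<in>J'. c' j \<noteq> 0" "\<forall>i\<in>I. (\<Sum>j\<in>J'. c' j * w j i) = 0"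
      using insert.IH[OF _ cJ' wK] insert.prems(1) unfolding J'_def by auto
    define c0 where "c0 = - (\<Sum>j\<in>J'. c' j * v j i0 * iv)"
    define c where "c = (\<lambda>j. if j = j0 then c0 else c' j)"
    have ident: "(\<Sum>j\<in>J. c j * v j i) = (\<Sum>j\<in>J'. c' j * w j i)" for i
    proof -
      have "(\<Sum>j\<in>J. c j * v j i) = c j0 * v j0 i + (\<Sum>j\<in>J'. c j * v j i)"
        using j0 insert.prems(1) unfolding J'_def by (simp add: sum.remove)
      also have "(\<Sum>j\<in>J'. c j * v j i) = (\<Sum>j\<in>J'. c' j * v j i)"
        unfolding c_def J'_def by (rule sum.cong) auto
      also have "c j0 * v j0 i = - (\<Sum>j\<in>J'. c' j * v j i0 * iv * v j0 i)"
        unfolding c_def c0_def by (simp add: sum_distrib_right)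
      finally show ?thesis
        unfolding w_def by (simp add: right_diff_distrib sum_subtractf mult.assoc)
    qed
    have c0K: "c0 \<in> K" unfolding c0_def
      using c'(1) insert.prems ivK assms(1) unfolding J'_def
      by (intro sdr_uminus[OF assms(1)] sdr_sum[OF assms(1)]) (auto simp: sdr_def)
    show ?thesis
    proof (rule exI[of _ c], intro conjI)
      show "\<forall>j\<in>J. c j \<in> K" using c0K c'(1) unfolding c_def J'_def by auto
      show "\<exists>j\<in>J. c j \<noteq> 0" using c'(2) unfolding c_def J'_def by auto
      show "\<forall>i\<in>insert i0 I. (\<Sum>j\<in>J. c j * v j i) = 0"
      proof
        fix i assume "i \<in> insert i0 I"
        then show "(\<Sum>j\<in>J. c j * v j i) = 0"
        proof
          assume "i = i0"
          have "w j i0 = 0" for j using j0(2) unfolding w_def iv_def by (simp add: mult.assoc)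
          then show ?thesis using ident \<open>i = i0\<close> by simp
        next
          assume "i \<in> I" then show ?thesis using ident c'(3) by simp
        qed
      qed
    qed
  qed
qed

definition cm :: "'a::division_ring \<Rightarrow> 'a poly \<Rightarrow> 'a poly" where
  "cm k p = Abs_poly (\<lambda>n. k * coeff p n)"

lemma coeff_cm[simp]: "coeff (cm k p) n = k * coeff p n"
proof -
  have "coeff (cm k p) = (\<lambda>n. k * coeff p n)"
    unfolding cm_def by (rule coeff_Abs_poly[where n="degree p"]) (simp add: coeff_eq_0)
  then show ?thesis by simp
qed

lemma cm_sum: "cm k (sum f A) = (\<Sum>a\<in>A. cm k (f a))"
  by (rule poly_eqI) (simp add: coeff_sum sum_distrib_left)
lemma cm_add: "cm k (p + q) = cm k p + cm k q"
  by (rule poly_eqI) (simp add: distrib_left)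
lemma cm_cm: "cm a (cm b p) = cm (a * b) p"
  by (rule poly_eqI) (simp add: mult.assoc)
lemma cm_one[simp]: "cm 1 p = p"
  by (rule poly_eqI) simp
lemma cm_zero[simp]: "cm 0 p = 0" "cm k 0 = 0"
  by (rule poly_eqI, simp)+
lemma degree_cm_le: "degree (cm k p) \<le> degree p"
  by (rule degree_le) (simp add: coeff_eq_0)

lemma dep_poly:
  assumes "sdr K" "finite Idx" "finite J" "card Idx < card J"
    "\<forall>j\<in>J. Y j = (\<Sum>\<iota>\<in>Idx. cm (e j \<iota>) (s \<iota>))" "\<forall>j\<in>J. \<forall>\<iota>\<in>Idx. e j \<iota> \<in> K"
  shows "\<exists>c. (\<forall>j\<in>J. c j \<in> K) \<and> (\<exists>j\<in>J. c j \<noteq> 0) \<and> (\<Sum>j\<in>J. cm (c j) (Y j)) = 0"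
proof -
  obtain c where c: "\<forall>j\<in>J. c j \<in> K" "\<exists>j\<in>J. c j \<noteq> 0" "\<forall>\<iota>\<in>Idx. (\<Sum>j\<in>J. c j * e j \<iota>) = 0"
    using steinitz[OF assms(1-4), of e] assms(6) by blast
  have "(\<Sum>j\<in>J. cm (c j) (Y j)) = (\<Sum>j\<in>J. cm (c j) (\<Sum>\<iota>\<in>Idx. cm (e j \<iota>) (s \<iota>)))"
    using assms(5) by (intro sum.cong) auto
  also have "\<dots> = 0"
  proof (rule poly_eqI)
    fix n
    have "coeff (\<Sum>j\<in>J. cm (c j) (\<Sum>\<iota>\<in>Idx. cm (e j \<iota>) (s \<iota>))) n
        = (\<Sum>j\<in>J. \<Sum>\<iota>\<in>Idx. c j * e j \<iota> * coeff (s \<iota>) n)"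
      by (simp add: coeff_sum sum_distrib_left mult.assoc)
    also have "\<dots> = (\<Sum>\<iota>\<in>Idx. (\<Sum>j\<in>J. c j * e j \<iota>) * coeff (s \<iota>) n)"
      by (subst sum.swap) (simp add: sum_distrib_right)
    also have "\<dots> = 0" using c(3) by simp
    finally show "coeff (\<Sum>j\<in>J. cm (c j) (\<Sum>\<iota>\<in>Idx. cm (e j \<iota>) (s \<iota>))) n = coeff 0 n" by simp
  qed
  finally show ?thesis using c by blast
qed

lemma inj_surj:
  assumes K: "sdr K" and Idx: "finite Idx"
    and span: "\<forall>x\<in>V. \<exists>e. (\<forall>\<iota>\<in>Idx. e \<iota> \<in> K) \<and> x = (\<Sum>\<iota>\<in>Idx. cm (e \<iota>) (s \<iota>))"
    and cl_add: "\<forall>x\<in>V. \<forall>y\<in>V. x + y \<in> V" and cl_cm: "\<forall>k\<in>K. \<forall>x\<in>V. cm k x \<in> V" and cl0: "0 \<in> V"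
    and TV: "\<forall>x\<in>V. T x \<in> V" and Tadd: "\<forall>x\<in>V. \<forall>y\<in>V. T (x + y) = T x + T y"
    and Tcm: "\<forall>k\<in>K. \<forall>x\<in>V. T (cm k x) = cm k (T x)"
    and Tinj: "\<forall>x\<in>V. T x = 0 \<longrightarrow> x = 0"
    and y: "y \<in> V"
  shows "\<exists>x\<in>V. T x = y"
proof -
  have T0: "T 0 = 0" using Tadd cl0 by (metis add_cancel_right_right add_0)
  have clsum: "finite A \<Longrightarrow> (\<And>a. a \<in> A \<Longrightarrow> f a \<in> V) \<Longrightarrow> sum f A \<in> V" for A and f :: "'c \<Rightarrow> _"
    by (induction A rule: finite_induct) (auto simp: cl0 cl_add)
  have Tsum: "finite A \<Longrightarrow> (\<And>a. a \<in> A \<Longrightarrow> f a \<in> V) \<Longrightarrow> T (sum f A) = (\<Sum>a\<in>A. T (f a))" for A and f :: "'c \<Rightarrow> _"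
    by (induction A rule: finite_induct) (auto simp: T0 Tadd clsum)
  have TkV: "(T^^k) y \<in> V" for k by (induction k) (auto simp: y TV)
  have main: "\<And>c. (\<exists>k\<le>N. c k \<noteq> 0) \<Longrightarrow> (\<forall>k\<le>N. c k \<in> K) \<Longrightarrow> (\<Sum>k\<le>N. cm (c k) ((T^^k) y)) = 0
          \<Longrightarrow> \<exists>x\<in>V. T x = y" for N
  proof (induction N)
    case 0
    then have "cm (c 0) y = 0" "c 0 \<noteq> 0" by auto
    then have "y = 0" by (metis cm_cm cm_one cm_zero(2) left_inverse)
    then show ?case using cl0 T0 by blast
  next
    case (Suc N)
    define Z where "Z = (\<Sum>k\<le>N. cm (c (Suc k)) ((T^^k) y))"
    have ZV: "Z \<in> V" unfolding Z_def using Suc.prems(2) by (intro clsum) (auto intro: TkV cl_cm[rule_format])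
    have TZ: "T Z = (\<Sum>k\<le>N. cm (c (Suc k)) ((T^^(Suc k)) y))"
      unfolding Z_def using Suc.prems(2) by (subst Tsum) (auto intro!: sum.cong TkV cl_cm[rule_format] simp: Tcm TkV)
    have sh: "(\<Sum>k\<le>Suc N. cm (c k) ((T^^k) y)) = cm (c 0) y + (\<Sum>k\<le>N. cm (c (Suc k)) ((T^^(Suc k)) y))"
      by (subst sum.atMost_Suc_shift) simp
    have eq: "cm (c 0) y + T Z = 0" using Suc.prems(3) unfolding TZ sh .
    show ?case
    proof (cases "c 0 = 0")
      case False
      define k where "k = - inverse (c 0)"
      have kK: "k \<in> K" using K Suc.prems(2) unfolding k_def by (auto intro: sdr_uminus simp: sdr_def)
      have "T (cm k Z) = cm k (T Z)" using Tcm kK ZV by simp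
      also have "T Z = - cm (c 0) y" using eq by (simp add: eq_neg_iff_add_eq_0 add.commute)
      also have "cm k (- cm (c 0) y) = y" using False unfolding k_def
        by (intro poly_eqI) (simp add: mult.assoc[symmetric])
      finally show ?thesis using cl_cm kK ZV by blast
    next
      case True
      then have "T Z = 0" using eq by simp
      then have "Z = 0" using Tinj ZV by simp
      then show ?thesis using Suc.IH[of "\<lambda>k. c (Suc k)"] Suc.prems True unfolding Z_def
        by (metis Suc_le_mono not0_implies_Suc)
    qed
  qed
  define N where "N = card Idx"
  have "\<forall>k\<in>{..N}. \<exists>e. (\<forall>\<iota>\<in>Idx. e \<iota> \<in> K) \<and> (T^^k) y = (\<Sum>\<iota>\<in>Idx. cm (e \<iota>) (s \<iota>))"
    using span TkV by blast
  then obtain e where e: "\<forall>k\<in>{..N}. (\<forall>\<iota>\<in>Idx. e k \<iota> \<in> K) \<and> (T^^k) y = (\<Sum>\<iota>\<in>Idx. cm (e k \<iota>) (s \<iota>))"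
    by metis
  obtain c where c: "\<forall>k\<in>{..N}. c k \<in> K" "\<exists>k\<in>{..N}. c k \<noteq> 0" "(\<Sum>k\<in>{..N}. cm (c k) ((T^^k) y)) = 0"
    using dep_poly[OF K Idx, of "{..N}" "\<lambda>k. (T^^k) y" e s] e unfolding N_def by auto
  show ?thesis using main[of N c] c by auto
qed


lemma sdr_add: "sdr K \<Longrightarrow> x \<in> K \<Longrightarrow> y \<in> K \<Longrightarrow> x + y \<in> K" unfolding sdr_def by blast
lemma sdr_diff: "sdr K \<Longrightarrow> x \<in> K \<Longrightarrow> y \<in> K \<Longrightarrow> x - y \<in> K" unfolding sdr_def by blast
lemma sdr_mul: "sdr K \<Longrightarrow> x \<in> K \<Longrightarrow> y \<in> K \<Longrightarrow> x * y \<in> K" unfolding sdr_def by blast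
lemma sdr_inv: "sdr K \<Longrightarrow> x \<in> K \<Longrightarrow> inverse x \<in> K" unfolding sdr_def by blast
lemma sdr_0: "sdr K \<Longrightarrow> 0 \<in> K" unfolding sdr_def by blast
lemma sdr_1: "sdr K \<Longrightarrow> 1 \<in> K" unfolding sdr_def by blast

lemma center_sdr: "sdr (center :: 'a::division_ring set)"
proof -
  have cen: "x \<in> center \<longleftrightarrow> (\<forall>y. x * y = y * x)" for x :: 'a unfolding center_def by simp
  have add: "x + y \<in> center" if x: "x \<in> center" and y: "y \<in> center" for x y :: 'a
    unfolding cen
  proof
    fix z
    have "x * z = z * x" "y * z = z * y" using x y unfolding cen by blast+
    then show "(x + y) * z = z * (x + y)" by (simp only: distrib_left distrib_right)
  qed
  have diff: "x - y \<in> center" if x: "x \<in> center" and y: "y \<in> center" for x y :: 'a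
    unfolding cen
  proof
    fix z
    have "x * z = z * x" "y * z = z * y" using x y unfolding cen by blast+
    then show "(x - y) * z = z * (x - y)" by (simp only: left_diff_distrib right_diff_distrib)
  qed
  have mul: "x * y \<in> center" if x: "x \<in> center" and y: "y \<in> center" for x y :: 'a
    unfolding cen
  proof
    fix z
    have yz: "y * z = z * y" and xz: "x * z = z * x" using x y unfolding cen by blast+
    have "x * y * z = x * (z * y)" by (simp add: mult.assoc yz)
    also have "\<dots> = (x * z) * y" by (simp add: mult.assoc)
    also have "\<dots> = z * (x * y)" by (simp add: mult.assoc xz)
    finally show "x * y * z = z * (x * y)" .
  qed
  have inv: "inverse x \<in> center" if x: "x \<in> center" for x :: 'a
    unfolding cen
  proof
    fix y
    show "inverse x * y = y * inverse x"
    proof (cases "x = 0")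
      case True then show ?thesis by simp
    next
      case False
      have c: "x * y = y * x" using x unfolding cen by blast
      have "inverse x * y = inverse x * (y * x) * inverse x" using False by (simp add: mult.assoc)
      also have "\<dots> = inverse x * (x * y) * inverse x" using c by simp
      also have "\<dots> = y * inverse x" using False by (simp add: mult.assoc[symmetric])
      finally show ?thesis .
    qed
  qed
  have "(0::'a) \<in> center" "(1::'a) \<in> center" unfolding cen by auto
  then show ?thesis unfolding sdr_def by (simp add: add diff mul inv)
qed

context tw begin

lemma s_sum: "\<sigma> (sum f A) = (\<Sum>a\<in>A. \<sigma> (f a))"
  using sp_sum[of 1] by simp

lemma s_inverse: "\<sigma> (inverse x) = inverse (\<sigma> x)"
proof (cases "x = 0")
  case True then show ?thesis by (simp add: s_zero)
next
  case False
  have "\<sigma> x * \<sigma> (inverse x) = 1" using False by (simp add: s_mult[symmetric] s_one)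
  from inverse_unique[OF this] show ?thesis by simp
qed

lemma s_center: "x \<in> center \<Longrightarrow> \<sigma> x \<in> center"
proof -
  assume x: "x \<in> center"
  have "\<sigma> x * y = y * \<sigma> x" for y
  proof -
    obtain z where z: "y = \<sigma> z" using s_bij unfolding bij_def surj_def by blast
    have "x * z = z * x" using x unfolding center_def by blast
    have "\<sigma> x * \<sigma> z = \<sigma> (x * z)" by (simp add: s_mult)
    also have "\<dots> = \<sigma> (z * x)" using \<open>x * z = z * x\<close> by simp
    also have "\<dots> = \<sigma> z * \<sigma> x" by (simp add: s_mult)
    finally show ?thesis unfolding z .
  qed
  then show ?thesis unfolding center_def by simp
qed

lemma sp_center: "x \<in> center \<Longrightarrow> (\<sigma>^^i) x \<in> center"
  by (induction i) (auto simp: s_center)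

lemma F0_sdr: "sdr (fixed_center \<sigma>)"
  using center_sdr unfolding sdr_def fixed_center_def
  by (auto simp: s_add s_one s_zero s_mult s_inverse sp_diff[of 1, simplified])

lemma F0_sub: "fixed_center \<sigma> \<subseteq> center" unfolding fixed_center_def by auto

lemma artin_dep:
  assumes ord: "order_on_center \<sigma> m" and S: "S \<subseteq> center" "finite S" "m < card S"
  shows "\<exists>e. (\<forall>\<gamma>\<in>S. e \<gamma> \<in> fixed_center \<sigma>) \<and> (\<exists>\<gamma>\<in>S. e \<gamma> \<noteq> 0) \<and> (\<Sum>\<gamma>\<in>S. e \<gamma> * \<gamma>) = 0"
proof -
  have m0: "0 < m" and per: "\<And>x. x \<in> center \<Longrightarrow> (\<sigma>^^m) x = x" using ord unfolding order_on_center_def by auto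
  define Sol where "Sol = {c. (\<forall>\<alpha>\<in>S. c \<alpha> \<in> center) \<and> (\<exists>\<alpha>\<in>S. c \<alpha> \<noteq> 0)
      \<and> (\<forall>i<m. (\<Sum>\<alpha>\<in>S. c \<alpha> * (\<sigma>^^i) \<alpha>) = 0)}"
  define supp where "supp c = {\<alpha>\<in>S. c \<alpha> \<noteq> 0}" for c :: "'a \<Rightarrow> 'a"
  obtain c0 where "c0 \<in> Sol"
  proof -
    have "\<exists>c. (\<forall>j\<in>S. c j \<in> center) \<and> (\<exists>j\<in>S. c j \<noteq> 0) \<and> (\<forall>i\<in>{..<m}. (\<Sum>j\<in>S. c j * (\<sigma>^^i) j) = 0)"
      using S by (intro steinitz[OF center_sdr]) (auto intro: sp_center)
    then show ?thesis using that unfolding Sol_def by auto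
  qed
  define n0 where "n0 = (LEAST n. \<exists>c\<in>Sol. card (supp c) = n)"
  obtain c where c: "c \<in> Sol" "card (supp c) = n0"
    using LeastI_ex[of "\<lambda>n. \<exists>c\<in>Sol. card (supp c) = n"] \<open>c0 \<in> Sol\<close> unfolding n0_def by blast
  have cmin: "\<And>d. d \<in> Sol \<Longrightarrow> n0 \<le> card (supp d)"
    unfolding n0_def by (rule Least_le) blast
  have cS: "\<forall>\<alpha>\<in>S. c \<alpha> \<in> center" "\<exists>\<alpha>\<in>S. c \<alpha> \<noteq> 0" "\<forall>i<m. (\<Sum>\<alpha>\<in>S. c \<alpha> * (\<sigma>^^i) \<alpha>) = 0"
    using c(1) unfolding Sol_def by blast+
  obtain \<alpha>0 where a0: "\<alpha>0 \<in> S" "c \<alpha>0 \<noteq> 0" using cS by blast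
  define ic where "ic = inverse (c \<alpha>0)"
  have icC: "ic \<in> center" unfolding ic_def using cS(1) a0(1) by (intro sdr_inv[OF center_sdr]) blast
  define c' where "c' \<alpha> = ic * c \<alpha>" for \<alpha>
  have c'C: "\<forall>\<alpha>\<in>S. c' \<alpha> \<in> center" unfolding c'_def using cS(1) icC by (blast intro: sdr_mul[OF center_sdr])
  have c'eq: "\<forall>i<m. (\<Sum>\<alpha>\<in>S. c' \<alpha> * (\<sigma>^^i) \<alpha>) = 0"
  proof (intro allI impI)
    fix i assume "i < m"
    then have "(\<Sum>\<alpha>\<in>S. c \<alpha> * (\<sigma>^^i) \<alpha>) = 0" using cS(3) by blast
    then show "(\<Sum>\<alpha>\<in>S. c' \<alpha> * (\<sigma>^^i) \<alpha>) = 0"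
      unfolding c'_def by (simp add: mult.assoc sum_distrib_left[symmetric])
  qed
  have c'a0: "c' \<alpha>0 = 1" using a0 unfolding c'_def ic_def by simp
  have suppc': "supp c' = supp c" unfolding supp_def c'_def ic_def using a0 by auto
  define c'' where "c'' \<alpha> = c' \<alpha> - \<sigma> (c' \<alpha>)" for \<alpha>
  have c''C: "\<forall>\<alpha>\<in>S. c'' \<alpha> \<in> center" unfolding c''_def using c'C by (blast intro: sdr_diff[OF center_sdr] s_center)
  have key: "(\<Sum>\<alpha>\<in>S. \<sigma> (c' \<alpha>) * (\<sigma>^^i) \<alpha>) = 0" if i: "i < m" for i
  proof (cases i)
    case 0
    have mm: "m - 1 < m" using m0 by simp
    have z0: "(\<Sum>\<alpha>\<in>S. c' \<alpha> * (\<sigma>^^(m-1)) \<alpha>) = 0" using c'eq mm by blast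
    have "(\<Sum>\<alpha>\<in>S. \<sigma> (c' \<alpha>) * (\<sigma>^^i) \<alpha>) = (\<Sum>\<alpha>\<in>S. \<sigma> (c' \<alpha> * (\<sigma>^^(m-1)) \<alpha>))"
    proof (rule sum.cong[OF refl])
      fix y assume y: "y \<in> S"
      have yc: "y \<in> center" using y S(1) by blast
      have "(\<sigma>^^i) y = y" unfolding 0 by simp
      also have "y = (\<sigma>^^m) y" using per[OF yc] by simp
      also have "(\<sigma>^^m) y = \<sigma> ((\<sigma>^^(m-1)) y)" using m0 by (cases m) auto
      finally show "\<sigma> (c' y) * (\<sigma>^^i) y = \<sigma> (c' y * (\<sigma>^^(m-1)) y)" by (simp only: s_mult)
    qed
    also have "\<dots> = \<sigma> (\<Sum>\<alpha>\<in>S. c' \<alpha> * (\<sigma>^^(m-1)) \<alpha>)" by (simp only: s_sum)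
    also have "\<dots> = 0" by (simp only: z0 s_zero)
    finally show ?thesis .
  next
    case (Suc j)
    have "(\<Sum>\<alpha>\<in>S. \<sigma> (c' \<alpha>) * (\<sigma>^^i) \<alpha>) = (\<Sum>\<alpha>\<in>S. \<sigma> (c' \<alpha> * (\<sigma>^^j) \<alpha>))"
      by (rule sum.cong[OF refl]) (simp only: Suc s_mult funpow.simps(2) comp_apply)
    also have "\<dots> = \<sigma> (\<Sum>\<alpha>\<in>S. c' \<alpha> * (\<sigma>^^j) \<alpha>)" by (simp only: s_sum)
    also have "(\<Sum>\<alpha>\<in>S. c' \<alpha> * (\<sigma>^^j) \<alpha>) = 0" using c'eq Suc i by simp
    finally show ?thesis by (simp only: s_zero)
  qed
  have c''eq: "\<forall>i<m. (\<Sum>\<alpha>\<in>S. c'' \<alpha> * (\<sigma>^^i) \<alpha>) = 0"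
    using c'eq key unfolding c''_def by (simp add: left_diff_distrib sum_subtractf)
  have "\<forall>\<alpha>\<in>S. c'' \<alpha> = 0"
  proof (rule ccontr)
    assume "\<not> ?thesis"
    then have "c'' \<in> Sol" using c''C c''eq unfolding Sol_def by auto
    moreover have "supp c'' \<subset> supp c"
    proof -
      have "supp c'' \<subseteq> supp c' - {\<alpha>0}"
        unfolding supp_def c''_def using c'a0 by (auto simp: s_one s_zero)
      then show ?thesis using suppc' a0 unfolding supp_def by auto
    qed
    then have "card (supp c'') < card (supp c)" using S(2) unfolding supp_def by (intro psubset_card_mono) auto
    ultimately show False using cmin c(2) by fastforce
  qed
  then have "\<forall>\<alpha>\<in>S. c' \<alpha> \<in> fixed_center \<sigma>" using c'C unfolding c''_def fixed_center_def by auto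
  moreover have "(\<Sum>\<alpha>\<in>S. c' \<alpha> * \<alpha>) = 0" using c'eq m0 by auto
  moreover have "\<exists>\<gamma>\<in>S. c' \<gamma> \<noteq> 0" using a0(1) c'a0 by (intro bexI[of _ \<alpha>0]) simp_all
  ultimately show ?thesis by blast
qed

definition indepF :: "'a set \<Rightarrow> bool" where
  "indepF S \<longleftrightarrow> (\<forall>e. (\<forall>\<gamma>\<in>S. e \<gamma> \<in> fixed_center \<sigma>) \<and> (\<Sum>\<gamma>\<in>S. e \<gamma> * \<gamma>) = 0 \<longrightarrow> (\<forall>\<gamma>\<in>S. e \<gamma> = 0))"

lemma F_span:
  assumes ord: "order_on_center \<sigma> m"
  shows "\<exists>C. finite C \<and> (\<forall>x\<in>center. \<exists>e. (\<forall>\<gamma>\<in>C. e \<gamma> \<in> fixed_center \<sigma>) \<and> x = (\<Sum>\<gamma>\<in>C. e \<gamma> * \<gamma>))"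
proof -
  define P where "P n \<longleftrightarrow> (\<exists>S. S \<subseteq> center \<and> finite S \<and> card S = n \<and> indepF S)" for n
  have P0: "P 0" unfolding P_def indepF_def by (intro exI[of _ "{}"]) auto
  have Pb: "\<forall>n. P n \<longrightarrow> n \<le> m"
  proof (intro allI impI)
    fix n assume "P n"
    then obtain S where S: "S \<subseteq> center" "finite S" "card S = n" "indepF S" unfolding P_def by blast
    show "n \<le> m"
    proof (rule ccontr)
      assume "\<not> n \<le> m"
      then obtain e where "\<forall>\<gamma>\<in>S. e \<gamma> \<in> fixed_center \<sigma>" "\<exists>\<gamma>\<in>S. e \<gamma> \<noteq> 0" "(\<Sum>\<gamma>\<in>S. e \<gamma> * \<gamma>) = 0"
        using artin_dep[OF ord S(1,2)] S(3) by auto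
      then show False using S(4) unfolding indepF_def by blast
    qed
  qed
  obtain n where n: "P n" "\<forall>y. P y \<longrightarrow> y \<le> n" using Nat.ex_has_greatest_nat[OF P0 Pb] by blast
  obtain S where S: "S \<subseteq> center" "finite S" "card S = n" "indepF S" using n(1) unfolding P_def by blast
  have "\<exists>e. (\<forall>\<gamma>\<in>S. e \<gamma> \<in> fixed_center \<sigma>) \<and> x = (\<Sum>\<gamma>\<in>S. e \<gamma> * \<gamma>)" if x: "x \<in> center" for x
  proof (cases "x \<in> S")
    case True
    show ?thesis
    proof (rule exI[of _ "\<lambda>\<gamma>. if \<gamma> = x then 1 else 0"], intro conjI)
      show "\<forall>\<gamma>\<in>S. (if \<gamma> = x then 1 else 0) \<in> fixed_center \<sigma>" using F0_sdr unfolding sdr_def by auto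
      have "(\<Sum>\<gamma>\<in>S. (if \<gamma> = x then 1 else 0) * \<gamma>) = (if x = x then 1 else 0) * x"
        using True S(2) by (intro sum_single) auto
      then show "x = (\<Sum>\<gamma>\<in>S. (if \<gamma> = x then 1 else 0) * \<gamma>)" by simp
    qed
  next
    case False
    have "\<not> P (Suc n)" using n(2) by fastforce
    then have "\<not> indepF (insert x S)" unfolding P_def using S x False by auto
    then obtain e where e: "\<forall>\<gamma>\<in>insert x S. e \<gamma> \<in> fixed_center \<sigma>" "(\<Sum>\<gamma>\<in>insert x S. e \<gamma> * \<gamma>) = 0"
       "\<exists>\<gamma>\<in>insert x S. e \<gamma> \<noteq> 0" unfolding indepF_def by blast
    have sumeq: "e x * x + (\<Sum>\<gamma>\<in>S. e \<gamma> * \<gamma>) = 0" using e(2) False S(2) by simp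
    have ex: "e x \<noteq> 0"
    proof
      assume "e x = 0"
      then have "(\<Sum>\<gamma>\<in>S. e \<gamma> * \<gamma>) = 0" using sumeq by simp
      then have "\<forall>\<gamma>\<in>S. e \<gamma> = 0" using S(4) e(1) unfolding indepF_def by blast
      then show False using e(3) \<open>e x = 0\<close> by auto
    qed
    define k where "k = - inverse (e x)"
    have kF: "k \<in> fixed_center \<sigma>" using F0_sdr e(1) unfolding k_def by (auto intro: sdr_uminus simp: sdr_def)
    have "x = k * (\<Sum>\<gamma>\<in>S. e \<gamma> * \<gamma>)"
    proof -
      have "e x * x = - (\<Sum>\<gamma>\<in>S. e \<gamma> * \<gamma>)" using sumeq by (simp add: eq_neg_iff_add_eq_0)
      then have "inverse (e x) * (e x * x) = inverse (e x) * - (\<Sum>\<gamma>\<in>S. e \<gamma> * \<gamma>)" by simp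
      then show ?thesis using ex unfolding k_def by (simp add: mult.assoc[symmetric])
    qed
    then have "x = (\<Sum>\<gamma>\<in>S. (k * e \<gamma>) * \<gamma>)" by (simp add: sum_distrib_left mult.assoc)
    moreover have "\<forall>\<gamma>\<in>S. k * e \<gamma> \<in> fixed_center \<sigma>" using kF e(1) by (blast intro: sdr_mul[OF F0_sdr])
    ultimately show ?thesis by (intro exI[of _ "\<lambda>\<gamma>. k * e \<gamma>"]) simp
  qed
  then show ?thesis using S(2) by blast
qed

lemma D_span:
  assumes ord: "order_on_center \<sigma> m" and fd: "fin_dim_over_center TYPE('a)"
  shows "\<exists>(G::('a \<times> 'a) set) g. finite G \<and> (\<forall>x. \<exists>e. (\<forall>\<iota>\<in>G. e \<iota> \<in> fixed_center \<sigma>) \<and> x = (\<Sum>\<iota>\<in>G. e \<iota> * g \<iota>))"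
proof -
  obtain C where C: "finite C" "\<forall>x\<in>center. \<exists>e. (\<forall>\<gamma>\<in>C. e \<gamma> \<in> fixed_center \<sigma>) \<and> x = (\<Sum>\<gamma>\<in>C. e \<gamma> * \<gamma>)"
    using F_span[OF ord] by blast
  obtain B :: "'a set" where B: "finite B" "\<forall>x. \<exists>c. (\<forall>b\<in>B. c b \<in> center) \<and> x = (\<Sum>b\<in>B. c b * b)"
    using fd unfolding fin_dim_over_center_def by blast
  have "\<exists>e. (\<forall>\<iota>\<in>B \<times> C. e \<iota> \<in> fixed_center \<sigma>) \<and> x = (\<Sum>\<iota>\<in>B \<times> C. e \<iota> * (snd \<iota> * fst \<iota>))" for x
  proof -
    obtain c where c: "\<forall>b\<in>B. c b \<in> center" "x = (\<Sum>b\<in>B. c b * b)" using B(2) by blast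
    have "\<forall>b\<in>B. \<exists>e. (\<forall>\<gamma>\<in>C. e \<gamma> \<in> fixed_center \<sigma>) \<and> c b = (\<Sum>\<gamma>\<in>C. e \<gamma> * \<gamma>)"
      using C(2) c(1) by blast
    then obtain E where E: "\<forall>b\<in>B. (\<forall>\<gamma>\<in>C. E b \<gamma> \<in> fixed_center \<sigma>) \<and> c b = (\<Sum>\<gamma>\<in>C. E b \<gamma> * \<gamma>)"
      by metis
    have "x = (\<Sum>b\<in>B. (\<Sum>\<gamma>\<in>C. E b \<gamma> * \<gamma>) * b)" using c(2) E by (auto intro: sum.cong)
    also have "\<dots> = (\<Sum>b\<in>B. \<Sum>\<gamma>\<in>C. E b \<gamma> * (\<gamma> * b))"
      by (simp add: sum_distrib_right mult.assoc)
    also have "\<dots> = (\<Sum>\<iota>\<in>B \<times> C. E (fst \<iota>) (snd \<iota>) * (snd \<iota> * fst \<iota>))"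
      by (simp add: sum.cartesian_product case_prod_beta)
    finally show ?thesis using E by (intro exI[of _ "\<lambda>\<iota>. E (fst \<iota>) (snd \<iota>)"]) auto
  qed
  then show ?thesis using B(1) C(1) by (rule_tac exI[of _ "B \<times> C"], rule_tac exI[of _ "\<lambda>\<iota>. snd \<iota> * fst \<iota>"]) auto
qed

end


context tw begin

definition fpol :: "nat \<Rightarrow> 'a \<Rightarrow> 'a poly" where
  "fpol m d = monom 1 m - monom d 0"

lemma coeff_fpol: "coeff (fpol m d) n = (if n = m then 1 else 0) - (if n = 0 then d else 0)"
  by (simp add: fpol_def coeff_monom)

lemma fpol_deg: assumes "0 < m" shows "degree (fpol m d) = m" "fpol m d \<noteq> 0"
proof -
  have "coeff (fpol m d) m = 1" using assms by (simp add: coeff_fpol)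
  moreover have "degree (fpol m d) \<le> m" by (rule degree_le) (simp add: coeff_fpol)
  ultimately show "degree (fpol m d) = m" by (metis le_antisym le_degree one_neq_zero)
  show "fpol m d \<noteq> 0" using \<open>coeff (fpol m d) m = 1\<close> by auto
qed

lemma cm_pm_left: "cm k (pm q f) = pm (cm k q) f"
  by (rule poly_eqI) (simp add: coeff_pm sum_distrib_left mult.assoc)

lemma cm_as_pm: "cm k p = pm (monom k 0) p"
  by (rule poly_eqI) (simp add: coeff_cmul)

context
  fixes m :: nat and d :: 'a
  assumes m0: "0 < m"
begin

abbreviation "ff \<equiv> fpol m d"

lemma rem_ex: "\<exists>q r. p = pm q ff + r \<and> degree r < m"
proof -
  obtain q r where "p = pm q ff + r" "r = 0 \<or> degree r < degree ff" using rdiv[OF fpol_deg(2)[OF m0]] by blast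
  then show ?thesis using m0 fpol_deg[OF m0] by (metis degree_0)
qed

lemma rem_uniq:
  assumes "pm q1 ff + r1 = pm q2 ff + r2" "degree r1 < m" "degree r2 < m"
  shows "q1 = q2" "r1 = r2"
proof -
  have eq: "pm (q1 - q2) ff = r2 - r1" using assms(1) by (simp add: pm_diff_left algebra_simps)
  show "q1 = q2"
  proof (rule ccontr)
    assume "q1 \<noteq> q2"
    then have "degree (pm (q1 - q2) ff) = degree (q1 - q2) + m" using fpol_deg[OF m0] by (simp add: degree_pm)
    moreover have "degree (r2 - r1) < m" using assms by (simp add: degree_diff_less)
    ultimately show False using eq by simp
  qed
  then show "r1 = r2" using eq by simp
qed

definition prem :: "'a poly \<Rightarrow> 'a poly" where
  "prem p = (THE r. degree r < m \<and> (\<exists>q. p = pm q ff + r))"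

lemma prem: "degree (prem p) < m" "\<exists>q. p = pm q ff + prem p"
proof -
  obtain q r where qr: "p = pm q ff + r" "degree r < m" using rem_ex by blast
  have "prem p = r" unfolding prem_def
  proof (rule the_equality)
    show "degree r < m \<and> (\<exists>q. p = pm q ff + r)" using qr by blast
    fix r' assume "degree r' < m \<and> (\<exists>q. p = pm q ff + r')"
    then show "r' = r" using rem_uniq(2) qr by metis
  qed
  then show "degree (prem p) < m" "\<exists>q. p = pm q ff + prem p" using qr by auto
qed

lemma prem_eqI: "p = pm q ff + r \<Longrightarrow> degree r < m \<Longrightarrow> prem p = r"
  using prem rem_uniq(2) by metis

lemma prem_small: "degree p < m \<Longrightarrow> prem p = p"
  by (rule prem_eqI[of _ 0]) auto

lemma prem_add: "prem (p + q) = prem p + prem q"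
proof -
  obtain a b where "p = pm a ff + prem p" "q = pm b ff + prem q" using prem by metis
  then have "p + q = pm (a + b) ff + (prem p + prem q)" by (simp add: pm_add_left algebra_simps)
  then show ?thesis using prem by (intro prem_eqI) (auto intro: degree_add_less)
qed

lemma prem_diff: "prem (p - q) = prem p - prem q"
proof -
  obtain a b where "p = pm a ff + prem p" "q = pm b ff + prem q" using prem by metis
  then have "p - q = pm (a - b) ff + (prem p - prem q)" by (simp add: pm_diff_left algebra_simps)
  then show ?thesis using prem by (intro prem_eqI) (auto intro: degree_diff_less)
qed

lemma prem_cm: "prem (cm k p) = cm k (prem p)"
proof -
  obtain a where "p = pm a ff + prem p" using prem by metis
  then have "cm k p = pm (cm k a) ff + cm k (prem p)" by (metis cm_add cm_pm_left)
  then show ?thesis using prem(1) degree_cm_le by (intro prem_eqI) (auto intro: le_less_trans)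
qed

lemma prem_zero: "prem 0 = 0" using prem_small m0 by simp

lemma pm_cm_right: assumes "k \<in> fixed_center \<sigma>" shows "pm a (cm k x) = cm k (pm a x)"
proof (rule poly_eqI)
  fix n
  have kc: "\<And>y. k * y = y * k" and k1: "\<sigma> k = k" using assms
    unfolding fixed_center_def center_def by blast+
  have ks: "\<And>i. (\<sigma>^^i) k = k"
  proof -
    fix i show "(\<sigma>^^i) k = k" by (induction i) (simp_all add: k1)
  qed
  have "coeff (pm a (cm k x)) n = (\<Sum>i\<le>n. coeff a i * (k * (\<sigma>^^i) (coeff x (n - i))))"
    unfolding coeff_pm by (simp add: sp_mult ks)
  also have "\<dots> = (\<Sum>i\<le>n. k * (coeff a i * (\<sigma>^^i) (coeff x (n - i))))"
    by (intro sum.cong refl) (metis kc mult.assoc)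
  finally show "coeff (pm a (cm k x)) n = coeff (cm k (pm a x)) n"
    by (simp add: coeff_pm sum_distrib_left)
qed

lemma V_span:
  assumes ord: "order_on_center \<sigma> m'" and fd: "fin_dim_over_center TYPE('a)"
  shows "\<exists>(Idx::(nat \<times> ('a \<times> 'a)) set) s. finite Idx \<and> (\<forall>x. degree x < m \<longrightarrow>
     (\<exists>e. (\<forall>\<iota>\<in>Idx. e \<iota> \<in> fixed_center \<sigma>) \<and> x = (\<Sum>\<iota>\<in>Idx. cm (e \<iota>) (s \<iota>))))"
proof -
  obtain G :: "('a \<times> 'a) set" and g where G: "finite G" "\<forall>x. \<exists>e. (\<forall>\<iota>\<in>G. e \<iota> \<in> fixed_center \<sigma>) \<and> x = (\<Sum>\<iota>\<in>G. e \<iota> * g \<iota>)"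
    using D_span[OF ord fd] by blast
  obtain E where E: "\<forall>x. (\<forall>\<iota>\<in>G. E x \<iota> \<in> fixed_center \<sigma>) \<and> x = (\<Sum>\<iota>\<in>G. E x \<iota> * g \<iota>)"
    using choice[OF G(2)] by blast
  have EK: "\<And>x \<iota>. \<iota> \<in> G \<Longrightarrow> E x \<iota> \<in> fixed_center \<sigma>" using E by blast
  have EX: "\<And>x. x = (\<Sum>\<iota>\<in>G. E x \<iota> * g \<iota>)" using E by blast
  have "(\<exists>e. (\<forall>\<iota>\<in>{..<m} \<times> G. e \<iota> \<in> fixed_center \<sigma>) \<and>
          x = (\<Sum>\<iota>\<in>{..<m} \<times> G. cm (e \<iota>) (monom (g (snd \<iota>)) (fst \<iota>))))" if x: "degree x < m" for x
  proof -
    have "x = (\<Sum>i\<le>m-1. monom (coeff x i) i)" using x m0 by (intro poly_as_sum_of_monoms'[symmetric]) auto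
    also have "{..m-1} = {..<m}" using m0 by auto
    also have "(\<Sum>i<m. monom (coeff x i) i) = (\<Sum>i<m. \<Sum>\<iota>\<in>G. cm (E (coeff x i) \<iota>) (monom (g \<iota>) i))"
    proof (intro sum.cong refl)
      fix i
      have "monom (coeff x i) i = monom (\<Sum>\<iota>\<in>G. E (coeff x i) \<iota> * g \<iota>) i"
        by (rule arg_cong[where f="\<lambda>c. monom c i"], rule EX)
      also have "\<dots> = (\<Sum>\<iota>\<in>G. cm (E (coeff x i) \<iota>) (monom (g \<iota>) i))"
        unfolding monom_sum by (intro sum.cong refl poly_eqI) (simp add: coeff_monom)
      finally show "monom (coeff x i) i = (\<Sum>\<iota>\<in>G. cm (E (coeff x i) \<iota>) (monom (g \<iota>) i))" .
    qed
    also have "\<dots> = (\<Sum>\<iota>\<in>{..<m} \<times> G. cm (E (coeff x (fst \<iota>)) (snd \<iota>)) (monom (g (snd \<iota>)) (fst \<iota>)))"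
      unfolding sum.cartesian_product by (rule sum.cong) auto
    finally have xeq: "x = (\<Sum>\<iota>\<in>{..<m} \<times> G. cm (E (coeff x (fst \<iota>)) (snd \<iota>)) (monom (g (snd \<iota>)) (fst \<iota>)))" .
    show ?thesis
    proof (rule exI[of _ "\<lambda>\<iota>. E (coeff x (fst \<iota>)) (snd \<iota>)"], rule conjI)
      show "\<forall>\<iota>\<in>{..<m} \<times> G. E (coeff x (fst \<iota>)) (snd \<iota>) \<in> fixed_center \<sigma>" using EK by auto
    qed (fact xeq)
  qed
  then show ?thesis using G(1)
    by (rule_tac exI[of _ "{..<m} \<times> G"], rule_tac exI[of _ "\<lambda>\<iota>. monom (g (snd \<iota>)) (fst \<iota>)"]) blast
qed

lemma division_poly:
  assumes ord: "order_on_center \<sigma> m'" and fd: "fin_dim_over_center TYPE('a)" and irr: "pirr ff"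
    and a: "degree a < m" "a \<noteq> 0"
  shows "bij_betw (\<lambda>x. prem (pm a x)) {x. degree x < m} {x. degree x < m}"
    "bij_betw (\<lambda>x. prem (pm x a)) {x. degree x < m} {x. degree x < m}"
proof -
  obtain Idx :: "(nat \<times> ('a \<times> 'a)) set" and s :: "nat \<times> ('a \<times> 'a) \<Rightarrow> 'a poly" where sp: "finite Idx" "\<forall>x\<in>{x. degree x < m}.
     \<exists>e. (\<forall>\<iota>\<in>Idx. e \<iota> \<in> fixed_center \<sigma>) \<and> x = (\<Sum>\<iota>\<in>Idx. cm (e \<iota>) (s \<iota>))"
    using V_span[OF ord fd] by blast
  have dff: "degree ff = m" using fpol_deg m0 by simp
  have gen: "bij_betw T {x. degree x < m} {x. degree x < m}"
    if TV: "\<forall>x\<in>{x. degree x < m}. T x \<in> {x. degree x < m}"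
    and Tadd: "\<forall>x\<in>{x. degree x < m}. \<forall>y\<in>{x. degree x < m}. T (x + y) = T x + T y"
    and Tdiff: "\<forall>x\<in>{x. degree x < m}. \<forall>y\<in>{x. degree x < m}. T (x - y) = T x - T y"
    and Tcm: "\<forall>k\<in>fixed_center \<sigma>. \<forall>x\<in>{x. degree x < m}. T (cm k x) = cm k (T x)"
    and Tinj: "\<forall>x\<in>{x. degree x < m}. T x = 0 \<longrightarrow> x = 0" for T :: "'a poly \<Rightarrow> 'a poly"
  proof (rule bij_betw_imageI)
    show "inj_on T {x. degree x < m}"
    proof (rule inj_onI)
      fix x y assume "x \<in> {x. degree x < m}" "y \<in> {x. degree x < m}" "T x = T y"
      then have "T (x - y) = 0" "x - y \<in> {x. degree x < m}" using Tdiff by (auto simp: degree_diff_less)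
      then show "x = y" using Tinj by auto
    qed
    show "T ` {x. degree x < m} = {x. degree x < m}"
    proof
      show "T ` {x. degree x < m} \<subseteq> {x. degree x < m}" using TV by auto
      show "{x. degree x < m} \<subseteq> T ` {x. degree x < m}"
      proof
        fix y :: "'a poly" assume "y \<in> {x. degree x < m}"
        then have "\<exists>x\<in>{x. degree x < m}. T x = y"
          using m0 by (intro inj_surj[OF F0_sdr sp(1) sp(2) _ _ _ TV Tadd Tcm Tinj])
            (auto intro: degree_add_less le_less_trans[OF degree_cm_le])
        then show "y \<in> T ` {x. degree x < m}" by auto
      qed
    qed
  qed
  have pmcm: "pm (cm k x) a = cm k (pm x a)" for k x
    by (simp add: cm_as_pm pm_assoc)
  show "bij_betw (\<lambda>x. prem (pm a x)) {x. degree x < m} {x. degree x < m}"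
  proof (rule gen)
    show "\<forall>x\<in>{x. degree x < m}. prem (pm a x) = 0 \<longrightarrow> x = 0"
    proof (intro ballI impI)
      fix x assume x: "x \<in> {x. degree x < m}" and z: "prem (pm a x) = 0"
      obtain q where "pm a x = pm q ff + prem (pm a x)" using prem by blast
      then have "pm a x = pm q ff" using z by simp
      then show "x = 0" using irr_no_zd[OF irr, of x a q] x a dff by auto
    qed
  qed (auto simp: prem pm_add_right prem_add pm_diff_right prem_diff pm_cm_right prem_cm)
  show "bij_betw (\<lambda>x. prem (pm x a)) {x. degree x < m} {x. degree x < m}"
  proof (rule gen)
    show "\<forall>x\<in>{x. degree x < m}. prem (pm x a) = 0 \<longrightarrow> x = 0"
    proof (intro ballI impI)
      fix x assume x: "x \<in> {x. degree x < m}" and z: "prem (pm x a) = 0"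
      obtain q where "pm x a = pm q ff + prem (pm x a)" using prem by blast
      then have "pm x a = pm q ff" using z by simp
      then show "x = 0" using irr_no_zd[OF irr, of a x q] x a dff by auto
    qed
  qed (auto simp: prem pm_add_left prem_add pm_diff_left prem_diff pmcm prem_cm)
qed

end
end


definition hm :: "'a::division_ring \<Rightarrow> 'a poly \<Rightarrow> 'a poly" where
  "hm w p = Abs_poly (\<lambda>n. w ^ n * coeff p n)"

lemma coeff_hm[simp]: "coeff (hm w p) n = w ^ n * coeff p n"
proof -
  have "coeff (hm w p) = (\<lambda>n. w ^ n * coeff p n)"
    unfolding hm_def by (rule coeff_Abs_poly[where n="degree p"]) (simp add: coeff_eq_0)
  then show ?thesis by simp
qed

lemma hm_add: "hm w (p + q) = hm w p + hm w q"
  by (rule poly_eqI) (simp add: distrib_left)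
lemma hm_diff: "hm w (p - q) = hm w p - hm w q"
  by (rule poly_eqI) (simp add: right_diff_distrib)
lemma hm_zero[simp]: "hm w 0 = 0"
  by (rule poly_eqI) simp

lemma hm_pow: "coeff ((hm w ^^ k) p) n = (w ^ n) ^ k * coeff p n"
  by (induction k) (simp_all add: mult.assoc power_Suc)

lemma hm_degree: assumes "w \<noteq> 0" shows "degree (hm w p) = degree p"
  by (rule degree_cong) (simp add: assms)

lemma hm_nz: assumes "w \<noteq> 0" shows "hm w p = 0 \<longleftrightarrow> p = 0"
  using assms by (auto simp: poly_eq_iff)

lemma hm_lead: "coeff (hm w p) 0 = coeff p 0" by simp

context tw begin

lemma hm_pm:
  assumes w: "w \<in> fixed_center \<sigma>"
  shows "hm w (pm p q) = pm (hm w p) (hm w q)"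
proof (rule poly_eqI)
  fix n
  have wc: "\<And>y. w * y = y * w" and w1: "\<sigma> w = w" using w unfolding fixed_center_def center_def by blast+
  have wpc: "\<And>y k. w ^ k * y = y * w ^ k"
  proof -
    fix y k show "w ^ k * y = y * w ^ k"
      by (induction k) (simp_all add: mult.assoc wc, metis mult.assoc wc)
  qed
  have ws: "\<And>i k. (\<sigma>^^i) (w ^ k) = w ^ k"
  proof -
    fix i k
    have s1: "(\<sigma>^^i) w = w" by (induction i) (simp_all add: w1)
    show "(\<sigma>^^i) (w ^ k) = w ^ k" by (induction k) (simp_all add: sp_mult s1)
  qed
  have "coeff (pm (hm w p) (hm w q)) n = (\<Sum>i\<le>n. w ^ i * coeff p i * (w ^ (n - i) * (\<sigma>^^i) (coeff q (n - i))))"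
    by (simp add: coeff_pm sp_mult ws)
  also have "\<dots> = (\<Sum>i\<le>n. w ^ n * (coeff p i * (\<sigma>^^i) (coeff q (n - i))))"
  proof (rule sum.cong[OF refl])
    fix i assume "i \<in> {..n}"
    then have "w ^ n = w ^ i * w ^ (n - i)" by (simp add: power_add[symmetric])
    moreover have "coeff p i * (w ^ (n - i) * X) = w ^ (n - i) * (coeff p i * X)" for X
    proof -
      have c: "coeff p i * w ^ (n - i) = w ^ (n - i) * coeff p i" by (rule wpc[symmetric])
      show ?thesis by (metis c mult.assoc)
    qed
    ultimately show "w ^ i * coeff p i * (w ^ (n - i) * (\<sigma>^^i) (coeff q (n - i))) =
        w ^ n * (coeff p i * (\<sigma>^^i) (coeff q (n - i)))" by (simp add: mult.assoc)
  qed
  also have "\<dots> = coeff (hm w (pm p q)) n" by (simp add: coeff_pm sum_distrib_left)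
  finally show "coeff (hm w (pm p q)) n = coeff (pm (hm w p) (hm w q)) n" by simp
qed

lemma hm_fpol: assumes "w ^ m = 1" shows "hm w (fpol m d) = fpol m d"
  by (rule poly_eqI) (auto simp: coeff_fpol assms right_diff_distrib)

lemma hm_cm: assumes "w \<in> center" shows "hm w (cm k p) = cm k (hm w p)"
proof (rule poly_eqI)
  fix n
  have wc: "\<And>y. w * y = y * w" using assms unfolding center_def by blast
  have wpc: "w ^ n * k = k * w ^ n"
    by (induction n) (simp_all add: mult.assoc wc, metis mult.assoc wc)
  show "coeff (hm w (cm k p)) n = coeff (cm k (hm w p)) n"
    by (simp add: mult.assoc[symmetric] wpc)
qed

lemma hm_pow_pm:
  assumes w: "w \<in> fixed_center \<sigma>"
  shows "(hm w ^^ i) (pm p q) = pm ((hm w ^^ i) p) ((hm w ^^ i) q)"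
  by (induction i) (simp_all add: hm_pm[OF w])

lemma hm_pow_fpol: assumes "w ^ m = 1" shows "(hm w ^^ i) (fpol m d) = fpol m d"
  by (induction i) (simp_all add: hm_fpol[OF assms])

lemma hm_pow_m: assumes "w ^ m = 1" shows "(hm w ^^ m) p = p"
proof (rule poly_eqI)
  fix n
  have "(w ^ n) ^ m = 1" by (metis assms power_mult power_mult_distrib mult.commute power_one)
  then show "coeff ((hm w ^^ m) p) n = coeff p n" by (simp add: hm_pow)
qed

lemma twn:
  "\<exists>Q. monom 1 n - monom (twisted_norm \<sigma> n z) 0 = pm Q (monom 1 1 - monom z 0)"
proof (induction n)
  case 0
  then show ?case by (intro exI[of _ 0]) simp
next
  case (Suc n)
  then obtain Q where Q: "monom 1 n - monom (twisted_norm \<sigma> n z) 0 = pm Q (monom 1 1 - monom z 0)" by blast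
  have e1: "pm (monom 1 n) (monom 1 1 - monom z 0) = monom 1 (Suc n) - monom ((\<sigma>^^n) z) n"
    by (simp add: pm_diff_right pm_monom_monom)
  have e2: "pm (monom ((\<sigma>^^n) z) 0) (monom 1 n - monom (twisted_norm \<sigma> n z) 0)
      = monom ((\<sigma>^^n) z) n - monom ((\<sigma>^^n) z * twisted_norm \<sigma> n z) 0"
    by (simp add: pm_diff_right pm_monom_monom)
  have "monom 1 (Suc n) - monom (twisted_norm \<sigma> (Suc n) z) 0
      = pm (monom 1 n) (monom 1 1 - monom z 0) + pm (monom ((\<sigma>^^n) z) 0) (monom 1 n - monom (twisted_norm \<sigma> n z) 0)"
    unfolding e1 e2 by simp
  also have "\<dots> = pm (monom 1 n + pm (monom ((\<sigma>^^n) z) 0) Q) (monom 1 1 - monom z 0)"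
    unfolding Q by (simp add: pm_add_left pm_assoc)
  finally show ?case by blast
qed

lemma rdvd_refl: "rdvd h h" unfolding rdvd_def by (rule exI[of _ pone]) simp
lemma rdvd_trans: "rdvd a b \<Longrightarrow> rdvd b c \<Longrightarrow> rdvd a c"
  unfolding rdvd_def by (metis pm_assoc)
lemma rdvd_left: "rdvd h x \<Longrightarrow> rdvd h (pm c x)"
  unfolding rdvd_def by (metis pm_assoc)
lemma rdvd_diff: "rdvd h x \<Longrightarrow> rdvd h y \<Longrightarrow> rdvd h (x - y)"
  unfolding rdvd_def by (metis pm_diff_left)
lemma rdvd_deg: assumes "rdvd h p" "p \<noteq> 0" shows "degree h \<le> degree p" "h \<noteq> 0"
proof -
  obtain a where a: "p = pm a h" using assms unfolding rdvd_def by blast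
  then have "a \<noteq> 0" "h \<noteq> 0" using assms by auto
  then show "degree h \<le> degree p" "h \<noteq> 0" using a by (simp_all add: degree_pm)
qed
lemma rdvd_hm: assumes w: "w \<in> fixed_center \<sigma>" shows "rdvd h p \<Longrightarrow> rdvd ((hm w ^^ i) h) ((hm w ^^ i) p)"
  unfolding rdvd_def using hm_pow_pm[OF w] by metis

end

context tw begin

lemma lideal_comb: "lideal {pm u x + pm v y | u v. True}"
  unfolding lideal_def
proof (intro conjI ballI allI impI)
  fix a b assume "a \<in> {pm u x + pm v y |u v. True}" "b \<in> {pm u x + pm v y |u v. True}"
  then obtain u v u' v' where "a = pm u x + pm v y" "b = pm u' x + pm v' y" by blast
  then have "a - b = pm (u - u') x + pm (v - v') y" by (simp add: pm_diff_left algebra_simps)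
  then show "a - b \<in> {pm u x + pm v y |u v. True}" by blast
next
  fix c a assume "a \<in> {pm u x + pm v y |u v. True}"
  then obtain u v where "a = pm u x + pm v y" by blast
  then have "pm c a = pm (pm c u) x + pm (pm c v) y" by (simp add: pm_add_right pm_assoc)
  then show "pm c a \<in> {pm u x + pm v y |u v. True}" by blast
qed

lemma const_poly: assumes "degree s = 0" "s \<noteq> 0" shows "s = monom (coeff s 0) 0" "coeff s 0 \<noteq> 0"
proof -
  show "s = monom (coeff s 0) 0" using assms(1) by (metis degree_0_id monom_0)
  then show "coeff s 0 \<noteq> 0" using assms(2) by (metis monom_eq_0)
qed

lemma bez_or_div:
  assumes h: "h \<noteq> 0" and L: "L \<noteq> 0"
    and sm: "\<And>r. rdvd r h \<Longrightarrow> r \<noteq> 0 \<Longrightarrow> degree r = 0 \<or> degree h \<le> degree r"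
  shows "rdvd h L \<or> (\<exists>u v. pm u L + pm v h = pone)"
proof -
  define N where "N = {pm u L + pm v h | u v. True}"
  have lN: "lideal N" unfolding N_def by (rule lideal_comb)
  have hN: "h \<in> N" unfolding N_def by (rule CollectI, rule exI[of _ 0], rule exI[of _ pone]) simp
  have LN: "L \<in> N" unfolding N_def by (rule CollectI, rule exI[of _ pone], rule exI[of _ 0]) simp
  obtain r where r: "r \<in> N" "r \<noteq> 0" "\<And>p. p \<in> N \<Longrightarrow> rdvd r p"
    using lideal_min[OF lN hN h] by blast
  show ?thesis
  proof (cases "degree r = 0")
    case True
    then have "punit r" using r(2) by (simp add: punit_def)
    then have "pone \<in> N" using cm_inv_unit[of r] lN r(1) unfolding lideal_def by metis
    then obtain u v where "pone = pm u L + pm v h" unfolding N_def by blast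
    then show ?thesis by metis
  next
    case False
    have rh: "rdvd r h" using r(3)[OF hN] .
    have dr: "degree h \<le> degree r" using sm[OF rh r(2)] False by simp
    obtain s where s: "h = pm s r" using rh unfolding rdvd_def by blast
    have snz: "s \<noteq> 0" using s h by auto
    have "degree s = 0" using s snz r(2) dr by (simp add: degree_pm)
    then obtain c where sc: "s = monom c 0" "c \<noteq> 0" using const_poly snz by metis
    have "pm (monom (inverse c) 0) h = r"
      unfolding s sc(1) using sc(2) by (simp add: pm_assoc[symmetric] pm_monom_monom)
    moreover obtain p where "L = pm p r" using r(3)[OF LN] unfolding rdvd_def by blast
    ultimately have "L = pm (pm p (monom (inverse c) 0)) h" by (simp add: pm_assoc)
    then show ?thesis unfolding rdvd_def by blast
  qed
qed

lemma lclm_step: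
  assumes L: "L \<noteq> 0" "L \<in> M" "\<forall>p\<in>M. rdvd L p"
    and h: "h \<noteq> 0" and sm: "\<And>r. rdvd r h \<Longrightarrow> r \<noteq> 0 \<Longrightarrow> degree r = 0 \<or> degree h \<le> degree r"
    and Mcl: "lideal M"
  shows "\<exists>L'. L' \<in> M \<and> rdvd h L' \<and> L' \<noteq> 0 \<and> (\<forall>p. p \<in> M \<and> rdvd h p \<longrightarrow> rdvd L' p)
     \<and> (degree L' = degree L \<or> degree L' = degree L + degree h)"
proof (cases "rdvd h L")
  case True
  then show ?thesis using L by blast
next
  case False
  then obtain u v where uv: "pm u L + pm v h = pone" using bez_or_div[OF h L(1) sm] by blast
  obtain a b where ab: "a \<noteq> 0" "b \<noteq> 0" "pm a L = pm b h" "degree a \<le> degree h"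
    using lclm_ex[OF L(1) h] by blast
  have "degree h \<le> degree a" using bez_deg[OF L(1) h uv ab(3)] ab(1) by blast
  then have da: "degree a = degree h" using ab(4) by simp
  define N where "N = pm a L"
  have NM: "N \<in> M" using Mcl L(2) unfolding lideal_def N_def by blast
  have Nh: "rdvd h N" unfolding N_def ab(3) rdvd_def by blast
  have Nnz: "N \<noteq> 0" unfolding N_def using ab(1) L(1) by (simp add: pm_eq0)
  have dN: "degree N = degree L + degree h" unfolding N_def using ab(1) L(1) da by (simp add: degree_pm)
  have gen: "rdvd N p" if p: "p \<in> M" "rdvd h p" for p
  proof -
    obtain s e where se: "p = pm s N + e" "e = 0 \<or> degree e < degree N" using rdiv[OF Nnz] by blast
    have ee: "e = p - pm s N" using se(1) by simp
    have eM: "e \<in> M" unfolding ee using Mcl p(1) NM unfolding lideal_def by blast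
    have eh: "rdvd h e" unfolding ee by (intro rdvd_diff p(2) rdvd_left Nh)
    obtain c' where c': "e = pm c' L" using L(3) eM unfolding rdvd_def by blast
    obtain e' where e': "e = pm e' h" using eh unfolding rdvd_def by blast
    have "e = 0"
    proof (rule ccontr)
      assume enz: "e \<noteq> 0"
      then have c'nz: "c' \<noteq> 0" using c' by auto
      have "degree h \<le> degree c'" using bez_deg[OF L(1) h uv, of c' e'] c' e' c'nz by auto
      then have "degree N \<le> degree e" using c' c'nz L(1) dN by (simp add: degree_pm)
      then show False using se(2) enz by simp
    qed
    then show ?thesis using se(1) unfolding rdvd_def by auto
  qed
  show ?thesis using NM Nh Nnz gen dN by blast
qed

end

context tw begin

lemma part2_irr:
  assumes mp: "prime m" and w: "w \<in> fixed_center \<sigma>" "primitive_root m w"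
    and dF: "d \<notin> fixed_center \<sigma>" and nn: "\<forall>z. d \<noteq> twisted_norm \<sigma> m z"
  shows "pirr (fpol m d)"
proof -
  have m2: "2 \<le> m" using mp by (simp add: prime_ge_2_nat)
  then have m0: "0 < m" by simp
  define f where "f = fpol m d"
  have df: "degree f = m" "f \<noteq> 0" using fpol_deg[OF m0] f_def by auto
  have wm: "w ^ m = 1" and wprim: "\<And>k. 0 < k \<Longrightarrow> k < m \<Longrightarrow> w ^ k \<noteq> 1"
    using w(2) unfolding primitive_root_def by auto
  have wnz: "w \<noteq> 0" using wm m0 by (metis power_0_left zero_neq_one less_not_refl)
  have d0: "d \<noteq> 0" using dF sdr_0[OF F0_sdr] by metis
  have f0: "coeff f 0 = - d" using m0 by (simp add: f_def coeff_fpol)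
  have nu: "\<not> punit f" using df m0 by (simp add: punit_def)
  have main: False if gh: "f = pm g h" "\<not> punit g" "\<not> punit h" for g h
  proof -
    have gnz: "g \<noteq> 0" and hnz: "h \<noteq> 0" using gh(1) df(2) by auto
    have dg: "degree g \<noteq> 0" and dh: "degree h \<noteq> 0" using gh gnz hnz by (auto simp: punit_def)
    have "degree g + degree h = m" using gh(1) gnz hnz df by (simp add: degree_pm)
    then have dhm: "degree h < m" using dg by simp
    define RF where "RF = {r. rdvd r f \<and> 1 \<le> degree r}"
    have hRF: "h \<in> RF" unfolding RF_def rdvd_def using gh(1) dh by auto
    define k where "k = (LEAST n. \<exists>r\<in>RF. degree r = n)"
    obtain h0 where h0: "h0 \<in> RF" "degree h0 = k"
      using LeastI_ex[of "\<lambda>n. \<exists>r\<in>RF. degree r = n"] hRF unfolding k_def by blast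
    have kmin: "\<And>r. r \<in> RF \<Longrightarrow> k \<le> degree r" unfolding k_def by (rule Least_le) blast
    have k1: "1 \<le> k" using h0 unfolding RF_def by auto
    have km: "k < m" using kmin[OF hRF] dhm by simp
    have h0f: "rdvd h0 f" using h0 unfolding RF_def by auto
    have small: "degree r = 0 \<or> k \<le> degree r" if "rdvd r f" for r
    proof (cases "degree r = 0")
      case False
      then have "r \<in> RF" using that unfolding RF_def by simp
      then show ?thesis using kmin by blast
    qed simp
    define hi where "hi i = (hm w ^^ i) h0" for i
    have hif: "rdvd (hi i) f" for i
      using rdvd_hm[OF w(1) h0f, of i] hm_pow_fpol[OF wm] unfolding hi_def f_def by simp
    have hid: "degree (hi i) = k" for i
      unfolding hi_def by (induction i) (simp_all add: h0(2) hm_degree[OF wnz])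
    have hinz: "hi i \<noteq> 0" for i using hid[of i] k1 by auto
    have hism: "degree r = 0 \<or> degree (hi i) \<le> degree r" if "rdvd r (hi i)" "r \<noteq> 0" for r i
      using small[OF rdvd_trans[OF that(1) hif]] hid by simp
    have hiS: "hm w (hi i) = hi (Suc i)" for i unfolding hi_def by simp
    have him: "hi m = hi 0" unfolding hi_def using hm_pow_m[OF wm] by simp
    define M where "M j = {p. \<forall>i\<le>j. rdvd (hi i) p}" for j
    have Mid: "lideal (M j)" for j
      unfolding lideal_def M_def by (auto intro: rdvd_diff rdvd_left)
    have MS: "p \<in> M (Suc j) \<longleftrightarrow> p \<in> M j \<and> rdvd (hi (Suc j)) p" for p j
      unfolding M_def by (auto simp: le_Suc_eq)
    have ind: "\<exists>L. L \<in> M j \<and> L \<noteq> 0 \<and> (\<forall>p\<in>M j. rdvd L p) \<and> k dvd degree L" for j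
    proof (induction j)
      case 0
      have "h0 \<in> M 0" unfolding M_def hi_def by (simp add: rdvd_refl)
      moreover have "\<forall>p\<in>M 0. rdvd h0 p" unfolding M_def hi_def by simp
      ultimately show ?case using hinz[of 0] h0(2) unfolding hi_def by auto
    next
      case (Suc j)
      then obtain L where L: "L \<in> M j" "L \<noteq> 0" "\<forall>p\<in>M j. rdvd L p" "k dvd degree L" by blast
      obtain L' where L': "L' \<in> M j" "rdvd (hi (Suc j)) L'" "L' \<noteq> 0"
          "\<forall>p. p \<in> M j \<and> rdvd (hi (Suc j)) p \<longrightarrow> rdvd L' p"
          "degree L' = degree L \<or> degree L' = degree L + degree (hi (Suc j))"
        using lclm_step[OF L(2) L(1) L(3) hinz[of "Suc j"] hism Mid] by blast
      have "k dvd degree L'" using L'(5) L(4) hid by auto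
      then show ?case using L' MS by blast
    qed
    obtain L where L: "L \<in> M (m - 1)" "L \<noteq> 0" "\<forall>p\<in>M (m - 1). rdvd L p" "k dvd degree L"
      using ind by blast
    have fM: "f \<in> M (m - 1)" unfolding M_def using hif by simp
    have Lf: "rdvd L f" using L(3) fM by blast
    have hLM: "hm w L \<in> M (m - 1)" unfolding M_def
    proof (intro CollectI allI impI)
      fix i assume i: "i \<le> m - 1"
      show "rdvd (hi i) (hm w L)"
      proof (cases i)
        case 0
        have "rdvd (hi (m - 1)) L" using L(1) unfolding M_def by simp
        then have "rdvd (hm w (hi (m - 1))) (hm w L)" using rdvd_hm[OF w(1), of _ _ 1] by simp
        moreover have "hm w (hi (m - 1)) = hi 0" using hiS[of "m - 1"] him m0 by simp
        ultimately show ?thesis using 0 by simp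
      next
        case (Suc i')
        have "rdvd (hi i') L" using L(1) i Suc unfolding M_def by simp
        then have "rdvd (hm w (hi i')) (hm w L)" using rdvd_hm[OF w(1), of _ _ 1] by simp
        then show ?thesis using hiS Suc by simp
      qed
    qed
    obtain c where c: "hm w L = pm c L" using L(3) hLM unfolding rdvd_def by blast
    have hLnz: "hm w L \<noteq> 0" using L(2) hm_nz[OF wnz] by simp
    have cnz: "c \<noteq> 0" using c hLnz by auto
    have "degree c = 0" using c cnz L(2) hm_degree[OF wnz, of L] by (simp add: degree_pm)
    then obtain c0 where c0: "c = monom c0 0" using const_poly cnz by metis
    have ceq: "w ^ n * coeff L n = c0 * coeff L n" for n
      using arg_cong[OF c, of "\<lambda>p. coeff p n"] unfolding c0 by (simp add: coeff_cmul)
    define n0 where "n0 = degree L"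
    have Ln0: "coeff L n0 \<noteq> 0" using L(2) unfolding n0_def by simp
    have cancel: "a = b" if "a * x = b * x" "x \<noteq> 0" for a b x :: 'a
      using that by (metis mult.assoc right_inverse mult_1_right)
    have c0n0: "c0 = w ^ n0" using cancel[OF ceq[of n0] Ln0] by simp
    have "rdvd (hi 0) L" using L(1) unfolding M_def by blast
    then have "rdvd h0 L" unfolding hi_def by simp
    then have kL: "k \<le> n0" using rdvd_deg(1)[of h0 L] L(2) h0(2) unfolding n0_def by simp
    have n0m: "n0 = m"
    proof (rule ccontr)
      assume "n0 \<noteq> m"
      moreover have "n0 \<le> m" using rdvd_deg(1)[OF Lf df(2)] df(1) unfolding n0_def by simp
      ultimately have n0m: "n0 < m" by simp
      have "coeff L 0 = 0"
      proof (rule ccontr)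
        assume L0: "coeff L 0 \<noteq> 0"
        have "c0 = w ^ 0" using cancel[OF ceq[of 0] L0] by simp
        then have "w ^ n0 = 1" using c0n0 by simp
        then show False using wprim[of n0] n0m kL k1 by simp
      qed
      obtain q where q: "f = pm q L" using Lf unfolding rdvd_def by blast
      have "coeff f 0 = 0" unfolding q coeff_pm using \<open>coeff L 0 = 0\<close> by simp
      then show False using f0 d0 by simp
    qed
    then have "k dvd m" using L(4) unfolding n0_def by simp
    then have k1': "k = 1" using mp km unfolding prime_nat_iff by auto
    define a where "a = coeff h0 1"
    define b where "b = coeff h0 0"
    have anz: "a \<noteq> 0" using h0(2) k1' unfolding a_def by (metis leading_coeff_0_iff degree_0 zero_neq_one)
    have anz': "coeff h0 (Suc 0) \<noteq> 0" using anz unfolding a_def by simp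
    define z where "z = - (inverse a * b)"
    define hn where "hn = monom 1 1 - monom z 0"
    have h0hn: "h0 = pm (monom a 0) hn"
    proof (rule poly_eqI)
      fix n
      show "coeff h0 n = coeff (pm (monom a 0) hn) n"
      proof (cases "n \<le> 1")
        case True
        then consider "n = 0" | "n = 1" by linarith
        then show ?thesis
          by cases (simp_all add: coeff_cmul hn_def z_def a_def b_def coeff_monom anz anz' mult.assoc[symmetric])
      next
        case False
        then have "coeff h0 n = 0" using h0(2) k1' by (intro coeff_eq_0) simp
        then show ?thesis using False by (simp add: coeff_cmul hn_def coeff_monom)
      qed
    qed
    obtain G0 where "f = pm G0 h0" using h0f unfolding rdvd_def by blast
    then have fG: "f = pm (pm G0 (monom a 0)) hn" using h0hn by (simp add: pm_assoc)
    obtain Q where Q: "monom 1 m - monom (twisted_norm \<sigma> m z) 0 = pm Q hn" using twn[of m z] unfolding hn_def by blast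
    have fm: "f = monom 1 m - monom d 0" unfolding f_def fpol_def by simp
    have eq: "pm (pm G0 (monom a 0) - Q) hn = monom (twisted_norm \<sigma> m z - d) 0"
    proof -
      have mdiff: "monom (x - y) n = monom x n - monom y n" for x y :: 'a and n
        by (rule poly_eqI) (simp add: coeff_monom)
      have "pm (pm G0 (monom a 0) - Q) hn = f - pm Q hn" using fG by (simp add: pm_diff_left)
      also have "\<dots> = monom (twisted_norm \<sigma> m z) 0 - monom d 0" unfolding Q[symmetric] fm by simp
      finally show ?thesis by (simp add: mdiff)
    qed
    have hnd: "degree hn = 1" "hn \<noteq> 0"
    proof -
      have "coeff hn 1 = 1" by (simp add: hn_def coeff_monom)
      moreover have "degree hn \<le> 1" unfolding hn_def by (intro degree_diff_le) (auto intro: order.trans[OF degree_monom_le])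
      ultimately show "degree hn = 1" "hn \<noteq> 0" by (metis le_antisym le_degree one_neq_zero, auto)
    qed
    have "pm G0 (monom a 0) - Q = 0"
    proof (rule ccontr)
      assume nz: "pm G0 (monom a 0) - Q \<noteq> 0"
      then have "degree (pm (pm G0 (monom a 0) - Q) hn) \<ge> 1" using hnd by (simp add: degree_pm)
      moreover have "degree (monom (twisted_norm \<sigma> m z - d) 0) = 0" using degree_monom_le[of _ 0] by (simp add: le_zero_eq)
      ultimately show False using eq by simp
    qed
    then have "monom (twisted_norm \<sigma> m z - d) 0 = 0" using eq by simp
    then have "d = twisted_norm \<sigma> m z" by simp
    then show False using nn by blast
  qed
  show ?thesis unfolding pirr_def f_def[symmetric] using df nu main by blast
qed

end


lemma tpoly_coeff: "tpoly (coeff p)"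
proof -
  have "{n. coeff p n \<noteq> 0} \<subseteq> {..degree p}" using le_degree by auto
  then show ?thesis unfolding tpoly_def using finite_subset by blast
qed

lemma tpoly_abs: assumes "tpoly f" shows "coeff (Abs_poly f) = f"
proof -
  obtain b where b: "\<forall>n\<in>{n. f n \<noteq> 0}. n \<le> b" using assms unfolding tpoly_def
    using finite_nat_set_iff_bounded_le by blast
  show ?thesis by (rule coeff_Abs_poly[where n=b]) (use b in force)
qed

lemma carrier_abs: assumes "x \<in> SA_carrier m" "0 < m"
  shows "coeff (Abs_poly x) = x" "degree (Abs_poly x) < m"
proof -
  show c: "coeff (Abs_poly x) = x" using assms unfolding SA_carrier_def
    by (intro coeff_Abs_poly[where n="m - 1"]) auto
  have "degree (Abs_poly x) \<le> m - 1" by (rule degree_le) (use assms c in \<open>auto simp: SA_carrier_def\<close>)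
  then show "degree (Abs_poly x) < m" using assms(2) by simp
qed

lemma carrier_coeff: "degree p < m \<Longrightarrow> coeff p \<in> SA_carrier m"
  unfolding SA_carrier_def by (auto intro: coeff_eq_0)

lemma carrier_iff: assumes "0 < m" shows "x \<in> SA_carrier m \<longleftrightarrow> (\<exists>p. degree p < m \<and> x = coeff p)"
  using carrier_abs[OF _ assms] carrier_coeff by metis

lemma tp_add_coeff: "tp_add (coeff p) (coeff q) = coeff (p + q)"
  unfolding tp_add_def by auto

lemma tp_const_coeff: "tp_const c = coeff (monom c 0)"
  unfolding tp_const_def by (auto simp: coeff_monom)

context tw begin

lemma tp_mul_coeff: "tp_mul \<sigma> (coeff p) (coeff q) = coeff (pm p q)"
  unfolding tp_mul_def by (auto simp: coeff_pm)

lemma tm_minus_coeff: "tm_minus m d = coeff (fpol m d)"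
  unfolding tm_minus_def by (auto simp: coeff_fpol)

lemma tp_rrem_coeff: assumes m0: "0 < m" shows "tp_rrem \<sigma> m d (coeff p) = coeff (prem m d p)"
  unfolding tp_rrem_def
proof (rule the_equality)
  obtain Q where Q: "p = pm Q (fpol m d) + prem m d p" using prem[OF m0] by blast
  show "coeff (prem m d p) \<in> SA_carrier m \<and> (\<exists>q. tpoly q \<and> coeff p = tp_add (tp_mul \<sigma> q (tm_minus m d)) (coeff (prem m d p)))"
  proof
    show "coeff (prem m d p) \<in> SA_carrier m" using prem(1)[OF m0] by (rule carrier_coeff)
    show "\<exists>q. tpoly q \<and> coeff p = tp_add (tp_mul \<sigma> q (tm_minus m d)) (coeff (prem m d p))"
      by (rule exI[of _ "coeff Q"]) (metis Q tpoly_coeff tm_minus_coeff tp_mul_coeff tp_add_coeff)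
  qed
  fix r assume r: "r \<in> SA_carrier m \<and> (\<exists>q. tpoly q \<and> coeff p = tp_add (tp_mul \<sigma> q (tm_minus m d)) r)"
  then obtain q where q: "tpoly q" "coeff p = tp_add (tp_mul \<sigma> q (tm_minus m d)) r" by blast
  have rc: "r \<in> SA_carrier m" using r by blast
  have rr: "r = coeff (Abs_poly r)" "degree (Abs_poly r) < m" using carrier_abs[OF rc m0] by auto
  have qq: "q = coeff (Abs_poly q)" using tpoly_abs[OF q(1)] by simp
  have "coeff p = coeff (pm (Abs_poly q) (fpol m d) + Abs_poly r)"
    using q(2) qq rr(1) by (metis tm_minus_coeff tp_mul_coeff tp_add_coeff)
  then have "p = pm (Abs_poly q) (fpol m d) + Abs_poly r" by (simp add: coeff_inject)
  then have "prem m d p = Abs_poly r" using prem_eqI[OF m0] rr(2) by blast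
  then show "r = coeff (prem m d p)" using rr(1) by simp
qed

lemma SA_mult_coeff: assumes "0 < m"
  shows "SA_mult \<sigma> m d (coeff p) (coeff q) = coeff (prem m d (pm p q))"
  unfolding SA_mult_def tp_mul_coeff tp_rrem_coeff[OF assms] ..

lemma tp_unit_iff: "tp_unit \<sigma> (coeff g) \<longleftrightarrow> punit g"
proof
  assume "tp_unit \<sigma> (coeff g)"
  then obtain g' where g': "tpoly g'" "tp_mul \<sigma> g' (coeff g) = tp_const 1" unfolding tp_unit_def by blast
  have "coeff (pm (Abs_poly g') g) = coeff pone"
    using g' tpoly_abs[OF g'(1)] by (metis tp_mul_coeff tp_const_coeff)
  then have "pm (Abs_poly g') g = pone" by (simp add: coeff_inject)
  then show "punit g" by (rule punit_of_inv)
next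
  assume "punit g"
  then obtain g' where "pm g' g = pone" "pm g g' = pone" using punit_inv by blast
  then show "tp_unit \<sigma> (coeff g)" unfolding tp_unit_def
    by (intro conjI tpoly_coeff exI[of _ "coeff g'"]) (simp_all add: tp_mul_coeff tp_const_coeff)
qed

lemma irr_transfer: assumes "0 < m" "tp_irreducible \<sigma> (tm_minus m d)" shows "pirr (fpol m d)"
  unfolding pirr_def
proof (intro conjI allI impI)
  show "fpol m d \<noteq> 0" using fpol_deg[OF assms(1)] by simp
  show "\<not> punit (fpol m d)" using assms(2) unfolding tp_irreducible_def tm_minus_coeff tp_unit_iff by simp
  fix g h assume "fpol m d = pm g h"
  then have "tm_minus m d = tp_mul \<sigma> (coeff g) (coeff h)" by (simp add: tm_minus_coeff tp_mul_coeff)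
  then have "tp_unit \<sigma> (coeff g) \<or> tp_unit \<sigma> (coeff h)"
    using assms(2) tpoly_coeff unfolding tp_irreducible_def by blast
  then show "punit g \<or> punit h" by (simp add: tp_unit_iff)
qed

end


lemma transfer_bij:
  fixes T :: "'a::division_ring poly \<Rightarrow> 'a poly" and S :: "(nat \<Rightarrow> 'a) \<Rightarrow> (nat \<Rightarrow> 'a)"
  assumes m0: "0 < m" and T: "bij_betw T {p. degree p < m} {p. degree p < m}"
    and S: "\<And>x. x \<in> SA_carrier m \<Longrightarrow> S x = coeff (T (Abs_poly x))"
  shows "bij_betw S (SA_carrier m) (SA_carrier m)"
proof -
  define C where "C = (SA_carrier m :: (nat \<Rightarrow> 'a) set)"
  define V where "V = {p :: 'a poly. degree p < m}"
  have b1: "bij_betw Abs_poly C V"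
  proof (rule bij_betw_imageI)
    show "inj_on Abs_poly C" unfolding C_def
      by (rule inj_on_inverseI[where g=coeff]) (rule carrier_abs(1)[OF _ m0])
    show "Abs_poly ` C = V"
    proof
      show "Abs_poly ` C \<subseteq> V" using carrier_abs(2)[OF _ m0] unfolding C_def V_def by auto
      show "V \<subseteq> Abs_poly ` C"
      proof
        fix p assume "p \<in> V"
        then have "coeff p \<in> C" "Abs_poly (coeff p) = p" unfolding C_def V_def by (simp_all add: carrier_coeff coeff_inverse)
        then show "p \<in> Abs_poly ` C" by (metis image_eqI)
      qed
    qed
  qed
  have b2: "bij_betw coeff V C"
  proof (rule bij_betw_imageI)
    show "inj_on coeff V" by (rule inj_onI) (simp add: coeff_inject)
    show "coeff ` V = C" using carrier_iff[OF m0] unfolding C_def V_def by auto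
  qed
  have "bij_betw (coeff \<circ> (T \<circ> Abs_poly)) C C"
    by (rule bij_betw_trans[OF bij_betw_trans[OF b1 T[folded V_def]] b2])
  moreover have "\<And>x. x \<in> C \<Longrightarrow> (coeff \<circ> (T \<circ> Abs_poly)) x = S x" using S unfolding C_def by simp
  ultimately show ?thesis using bij_betw_cong unfolding C_def by blast
qed

context tw begin

lemma hm_prem: assumes m0: "0 < m" and w: "w \<in> fixed_center \<sigma>" "w ^ m = 1" "w \<noteq> 0"
  shows "hm w (prem m d p) = prem m d (hm w p)"
proof -
  obtain q where q: "p = pm q (fpol m d) + prem m d p" using prem[OF m0] by blast
  then have "hm w p = pm (hm w q) (fpol m d) + hm w (prem m d p)"
    by (metis hm_add hm_pm[OF w(1)] hm_fpol[OF w(2)])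
  moreover have "degree (hm w (prem m d p)) < m" using prem(1)[OF m0] hm_degree[OF w(3)] by simp
  ultimately show ?thesis using prem_eqI[OF m0] by metis
qed

lemma cyc_main:
  assumes fd: "fin_dim_over_center TYPE('a)" and ord: "order_on_center \<sigma> m"
    and w: "w \<in> fixed_center \<sigma>" "primitive_root m w" and irr: "pirr (fpol m d)"
  shows "nonassoc_cyclic_ext \<sigma> m d"
proof -
  have m0: "0 < m" using ord unfolding order_on_center_def by simp
  have wm: "w ^ m = 1" and wprim: "\<And>k. 0 < k \<Longrightarrow> k < m \<Longrightarrow> w ^ k \<noteq> 1"
    using w(2) unfolding primitive_root_def by auto
  have wnz: "w \<noteq> 0" using wm m0 by (metis power_0_left zero_neq_one less_not_refl)
  have SAc: "\<And>p q. SA_mult \<sigma> m d (coeff p) (coeff q) = coeff (prem m d (pm p q))" using SA_mult_coeff[OF m0] .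
  have div: "SA_division \<sigma> m d"
    unfolding SA_division_def
  proof (intro ballI impI conjI)
    fix a :: "nat \<Rightarrow> 'a" assume a: "a \<in> SA_carrier m" "a \<noteq> (\<lambda>_. 0)"
    define A where "A = Abs_poly a"
    have Aa: "coeff A = a" "degree A < m" using carrier_abs[OF a(1) m0] A_def by auto
    have Anz: "A \<noteq> 0" using Aa(1) a(2) by auto
    show "bij_betw (\<lambda>x. SA_mult \<sigma> m d a x) (SA_carrier m) (SA_carrier m)"
      by (rule transfer_bij[OF m0 division_poly(1)[OF m0 ord fd irr Aa(2) Anz]])
         (metis Aa(1) SAc carrier_abs(1) m0)
    show "bij_betw (\<lambda>x. SA_mult \<sigma> m d x a) (SA_carrier m) (SA_carrier m)"
      by (rule transfer_bij[OF m0 division_poly(2)[OF m0 ord fd irr Aa(2) Anz]])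
         (metis Aa(1) SAc carrier_abs(1) m0)
  qed
  have cmon: "SA_mult \<sigma> m d (tp_const c) (coeff (monom 1 i)) = coeff (monom c i)" if "i < m" for c i
  proof -
    have "SA_mult \<sigma> m d (tp_const c) (coeff (monom 1 i)) = coeff (prem m d (monom c i))"
      unfolding tp_const_coeff SAc by (simp add: pm_monom_monom)
    also have "prem m d (monom c i) = monom c i" using that
      by (intro prem_small[OF m0]) (meson le_less_trans degree_monom_le)
    finally show ?thesis .
  qed
  have free: "SA_free_rank \<sigma> m d m"
    unfolding SA_free_rank_def
  proof (intro exI[of _ "\<lambda>i. coeff (monom 1 i)"] conjI allI impI ballI)
    fix i :: nat assume "i < m"
    then show "coeff (monom 1 i) \<in> SA_carrier m" by (intro carrier_coeff) (meson le_less_trans degree_monom_le)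
  next
    fix x :: "nat \<Rightarrow> 'a" assume x: "x \<in> SA_carrier m"
    have sumf: "(\<lambda>n. \<Sum>i<m. SA_mult \<sigma> m d (tp_const (c i)) (coeff (monom 1 i)) n) = (\<lambda>n. if n < m then c n else 0)" for c
    proof
      fix n
      have "(\<Sum>i<m. SA_mult \<sigma> m d (tp_const (c i)) (coeff (monom 1 i)) n) = (\<Sum>i<m. if n = i then c i else 0)"
        by (intro sum.cong refl) (simp add: cmon coeff_monom)
      also have "\<dots> = (if n < m then c n else 0)" by (simp add: sum.delta)
      finally show "(\<Sum>i<m. SA_mult \<sigma> m d (tp_const (c i)) (coeff (monom 1 i)) n) = (if n < m then c n else 0)" .
    qed
    have xz: "\<And>n. m \<le> n \<Longrightarrow> x n = 0" using x unfolding SA_carrier_def by auto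
    show "\<exists>!c. (\<forall>i\<ge>m. c i = 0) \<and> x = (\<lambda>n. \<Sum>i<m. SA_mult \<sigma> m d (tp_const (c i)) (coeff (monom 1 i)) n)"
      unfolding sumf
    proof (rule ex1I[of _ x])
      show "(\<forall>i\<ge>m. x i = 0) \<and> x = (\<lambda>n. if n < m then x n else 0)" using xz by (auto simp: fun_eq_iff)
      fix c assume c: "(\<forall>i\<ge>m. c i = 0) \<and> x = (\<lambda>n. if n < m then c n else 0)"
      then show "c = x" by (auto simp: fun_eq_iff not_less)
    qed
  qed
  define H where "H x = (\<lambda>n. w ^ n * x n)" for x :: "nat \<Rightarrow> 'a"
  have Hc: "H (coeff p) = coeff (hm w p)" for p unfolding H_def by auto
  have Hk: "(H ^^ k) x = (\<lambda>n. (w ^ n) ^ k * x n)" for k x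
    by (induction k) (auto simp: H_def mult.assoc)
  have HC: "H x \<in> SA_carrier m" if "x \<in> SA_carrier m" for x using that unfolding H_def SA_carrier_def by auto
  have wn: "w ^ n \<noteq> 0" for n using wnz by simp
  have inv1: "inverse (w ^ n) * (w ^ n * y) = y" for n y
    using wn[of n] by (simp add: mult.assoc[symmetric])
  have inv2: "w ^ n * (inverse (w ^ n) * y) = y" for n y
    using wn[of n] by (simp add: mult.assoc[symmetric])
  have Hbij: "bij_betw H (SA_carrier m) (SA_carrier m)"
  proof (rule bij_betw_byWitness[where f'="\<lambda>x n. inverse (w ^ n) * x n"])
    show "\<forall>a\<in>SA_carrier m. (\<lambda>n. inverse (w ^ n) * H a n) = a"
      unfolding H_def by (simp add: inv1)
    show "\<forall>a\<in>SA_carrier m. H (\<lambda>n. inverse (w ^ n) * a n) = a"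
      unfolding H_def by (simp add: inv2)
    show "H ` SA_carrier m \<subseteq> SA_carrier m" using HC by blast
    show "(\<lambda>x n. inverse (w ^ n) * x n) ` SA_carrier m \<subseteq> SA_carrier m" unfolding SA_carrier_def by auto
  qed
  have Hmul: "H (SA_mult \<sigma> m d x y) = SA_mult \<sigma> m d (H x) (H y)" if "x \<in> SA_carrier m" "y \<in> SA_carrier m" for x y
  proof -
    have "x = coeff (Abs_poly x)" "y = coeff (Abs_poly y)"
      using carrier_abs(1)[OF that(1) m0] carrier_abs(1)[OF that(2) m0] by simp_all
    then show ?thesis by (metis SAc Hc hm_prem[OF m0 w(1) wm wnz] hm_pm[OF w(1)])
  qed
  have Hconst: "H (tp_const c) = tp_const c" for c unfolding H_def tp_const_def by auto
  have constC: "tp_const c \<in> SA_carrier m" for c unfolding tp_const_def SA_carrier_def using m0 by auto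
  have aut: "SA_aut \<sigma> m d H"
    unfolding SA_aut_def
  proof (intro conjI ballI)
    show "bij_betw H (SA_carrier m) (SA_carrier m)" by (rule Hbij)
    fix x y :: "nat \<Rightarrow> 'a" assume "x \<in> SA_carrier m" "y \<in> SA_carrier m"
    then show "H (tp_add x y) = tp_add (H x) (H y)" "H (SA_mult \<sigma> m d x y) = SA_mult \<sigma> m d (H x) (H y)"
      using Hmul by (auto simp: H_def tp_add_def distrib_left)
  next
    fix c :: 'a and x :: "nat \<Rightarrow> 'a" assume "c \<in> fixed_center \<sigma>" "x \<in> SA_carrier m"
    then show "H (SA_mult \<sigma> m d (tp_const c) x) = SA_mult \<sigma> m d (tp_const c) (H x)"
      using Hmul[OF constC] Hconst by simp
  qed
  have H1': "(H ^^ k) (tp_const c) = tp_const c" for k c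
    by (induction k) (simp_all add: Hconst)
  have H1: "\<forall>k c. (H ^^ k) (tp_const c) = tp_const c" using H1' by blast
  have H2: "\<forall>x\<in>SA_carrier m. (H ^^ m) x = x"
  proof
    fix x
    have "(w ^ n) ^ m = 1" for n by (metis wm power_mult power_mult_distrib mult.commute power_one)
    then show "(H ^^ m) x = x" by (simp add: Hk)
  qed
  have H3: "\<forall>k. 0 < k \<and> k < m \<longrightarrow> (\<exists>x\<in>SA_carrier m. (H ^^ k) x \<noteq> x)"
  proof (intro allI impI)
    fix k assume k: "0 < k \<and> k < m"
    have "degree (monom (1::'a) 1) \<le> 1" by (rule degree_monom_le)
    then have "coeff (monom (1::'a) 1) \<in> SA_carrier m" using k by (intro carrier_coeff) linarith
    moreover have "(H ^^ k) (coeff (monom 1 1)) 1 \<noteq> coeff (monom 1 1) 1"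
      using wprim[of k] k by (simp add: Hk)
    ultimately show "\<exists>x\<in>SA_carrier m. (H ^^ k) x \<noteq> x" by metis
  qed
  show ?thesis unfolding nonassoc_cyclic_ext_def using div free aut H1 H2 H3 by blast
qed

end


theorem corollary3p3:
  fixes \<sigma> :: "'a::division_ring \<Rightarrow> 'a" and m :: nat and d :: 'a
  assumes "fin_dim_over_center TYPE('a)"
    and "ring_aut \<sigma>"
    and "order_on_center \<sigma> m"
    and "d \<notin> fixed_center \<sigma>"
    and "\<exists>w\<in>fixed_center \<sigma>. primitive_root m w"
  shows "(tp_irreducible \<sigma> (tm_minus m d) \<longrightarrow> nonassoc_cyclic_ext \<sigma> m d)
       \<and> (prime m \<and> (\<forall>z. d \<noteq> twisted_norm \<sigma> m z) \<longrightarrow> nonassoc_cyclic_ext \<sigma> m d)"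
proof -
  interpret tw \<sigma> using assms(2) unfolding ring_aut_def by unfold_locales auto
  have m0: "0 < m" using assms(3) unfolding order_on_center_def by simp
  obtain w where w: "w \<in> fixed_center \<sigma>" "primitive_root m w" using assms(5) by blast
  show ?thesis
  proof (intro conjI impI)
    assume "tp_irreducible \<sigma> (tm_minus m d)"
    then have "pirr (fpol m d)" by (rule irr_transfer[OF m0])
    then show "nonassoc_cyclic_ext \<sigma> m d" by (rule cyc_main[OF assms(1) assms(3) w])
  next
    assume a: "prime m \<and> (\<forall>z. d \<noteq> twisted_norm \<sigma> m z)"
    have "pirr (fpol m d)" using part2_irr[of m w d] a w assms(4) by blast
    then show "nonassoc_cyclic_ext \<sigma> m d" by (rule cyc_main[OF assms(1) assms(3) w])
  qed
qed


end
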